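(* Let $x_k(t)$ be smooth with $\dot x_k^2\ne1$, $\wp'(x_k)\neq0$, and $u_k=\wp(x_k)$. Then $$\frac{\ddot x_k}{\dot x_k^2-1}=\zeta(x_{k+1}+x_k)-\zeta(x_{k+1}-x_k)+\zeta(x_k+x_{k-1})+\zeta(x_k-x_{k-1})-2\zeta(2x_k)\quad\forall k$$ holds if and only if $$\frac{\ddot u_k-r'(u_k)/2}{\dot u_k^2-r(u_k)}=\frac{1}{u_k-u_{k+1}}+\frac1{u_k-u_{k-1}}\quad\forall k.$$
   Context: $\wp,\zeta$: Weierstrass functions with invariants $g_2,g_3$ (nondegenerate); $r(u)=4u^3-g_2u-g_3$. *)

theory Defs
  imports "HOL-Complex_Analysis.Complex_Analysis"
begin

definition lattice :: "complex \<Rightarrow> complex \<Rightarrow> complex set" where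
  "lattice w1 w2 = {of_int m * w1 + of_int n * w2 | m n. True}"

definition nondeg_periods :: "complex \<Rightarrow> complex \<Rightarrow> bool" where
  "nondeg_periods w1 w2 \<longleftrightarrow> w1 \<noteq> 0 \<and> Im (w2 / w1) \<noteq> 0"

definition wp :: "complex \<Rightarrow> complex \<Rightarrow> complex \<Rightarrow> complex" where
  "wp w1 w2 z = 1 / z ^ 2 +
     infsum (\<lambda>w. 1 / (z - w) ^ 2 - 1 / w ^ 2) (lattice w1 w2 - {0})"

definition wzeta :: "complex \<Rightarrow> complex \<Rightarrow> complex \<Rightarrow> complex" where
  "wzeta w1 w2 z = 1 / z +
     infsum (\<lambda>w. 1 / (z - w) + 1 / w + z / w ^ 2) (lattice w1 w2 - {0})"

definition g2 :: "complex \<Rightarrow> complex \<Rightarrow> complex" where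
  "g2 w1 w2 = 60 * infsum (\<lambda>w. 1 / w ^ 4) (lattice w1 w2 - {0})"

definition g3 :: "complex \<Rightarrow> complex \<Rightarrow> complex" where
  "g3 w1 w2 = 140 * infsum (\<lambda>w. 1 / w ^ 6) (lattice w1 w2 - {0})"

definition rpoly :: "complex \<Rightarrow> complex \<Rightarrow> complex \<Rightarrow> complex" where
  "rpoly w1 w2 u = 4 * u ^ 3 - g2 w1 w2 * u - g3 w1 w2"

definition rpoly' :: "complex \<Rightarrow> complex \<Rightarrow> complex \<Rightarrow> complex" where
  "rpoly' w1 w2 u = 12 * u ^ 2 - g2 w1 w2"

end

theory Submission
  imports Defs
begin

definition mx :: "int \<times> int \<Rightarrow> int" where "mx x = max \<bar>fst x\<bar> \<bar>snd x\<bar>"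

lemma mx_nonneg [simp]: "0 \<le> mx x" by (simp add: mx_def)

lemma shell_sub: "{x. mx x = k} \<subseteq> ({-k..k} \<times> {-k,k}) \<union> ({-k,k} \<times> {-k..k})"
  by (auto simp: mx_def max_def split: if_splits)

lemma shell_finite: "finite {x. mx x = k}"
  by (rule finite_subset[OF shell_sub]) auto

lemma shell_card: assumes "k \<ge> 1" shows "real (card {x. mx x = k}) \<le> 12 * real_of_int k"
proof -
  have "card {x. mx x = k} \<le> card (({-k..k} \<times> {-k,k}) \<union> ({-k,k} \<times> {-k..k}))"
    by (rule card_mono[OF _ shell_sub]) auto
  also have "\<dots> \<le> card ({-k..k} \<times> {-k,k}) + card ({-k,k} \<times> {-k..k})"
    by (rule card_Un_le)
  also have "\<dots> \<le> nat (2*k+1) * 2 + 2 * nat (2*k+1)"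
  proof -
    have c2: "card {-k,k} \<le> 2" by (rule order_trans[OF card_insert_le_m1]) auto
    have c1: "card {-k..k} = nat (2*k+1)" by simp
    show ?thesis unfolding card_cartesian_product c1
      using c2 by (intro add_mono mult_left_mono mult_right_mono) auto
  qed
  finally have "card {x. mx x = k} \<le> nat (2*k+1) * 2 + 2 * nat (2*k+1)" .
  hence "real (card {x. mx x = k}) \<le> real (nat (2*k+1) * 2 + 2 * nat (2*k+1))"
    by linarith
  also have "\<dots> = 8 * real_of_int k + 4" using assms by simp
  also have "\<dots> \<le> 12 * real_of_int k" using assms by simp
  finally show ?thesis .
qed

definition SK :: "nat \<Rightarrow> (int \<times> int) set" where "SK K = {x. 1 \<le> mx x \<and> mx x \<le> int K}"

lemma SK_finite: "finite (SK K)"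
proof -
  have "SK K \<subseteq> {-int K..int K} \<times> {-int K..int K}"
    by (auto simp: SK_def mx_def max_def split: if_splits)
  thus ?thesis by (rule finite_subset) auto
qed

lemma SK_Suc: "SK (Suc K) = SK K \<union> {x. mx x = int K + 1}"
  by (auto simp: SK_def)

lemma SK_sum: "(\<Sum>x\<in>SK K. 1 / real_of_int (mx x) ^ 3) \<le> 24 - 24 / (real K + 1)"
proof (induction K)
  case 0
  have "SK 0 = {}" by (auto simp: SK_def)
  thus ?case by simp
next
  case (Suc K)
  have disj: "SK K \<inter> {x. mx x = int K + 1} = {}" by (auto simp: SK_def)
  have "(\<Sum>x\<in>SK (Suc K). 1 / real_of_int (mx x) ^ 3) =
        (\<Sum>x\<in>SK K. 1 / real_of_int (mx x) ^ 3) + (\<Sum>x\<in>{x. mx x = int K + 1}. 1 / real_of_int (mx x) ^ 3)"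
    unfolding SK_Suc by (rule sum.union_disjoint[OF SK_finite shell_finite disj])
  also have "(\<Sum>x\<in>{x. mx x = int K + 1}. 1 / real_of_int (mx x) ^ 3)
           = real (card {x. mx x = int K + 1}) * (1 / (real K + 1) ^ 3)"
    by (subst sum.cong[OF refl, of _ _ "\<lambda>_. 1 / (real K + 1) ^ 3"]) auto
  also have "\<dots> \<le> (12 * (real K + 1)) * (1 / (real K + 1) ^ 3)"
    using shell_card[of "int K + 1"] by (intro mult_right_mono) auto
  also have "\<dots> = 12 / (real K + 1)^2"
  proof -
    have "real K + 1 > 0" by simp
    then show ?thesis by (simp add: divide_simps power2_eq_square power3_eq_cube)
  qed
  finally have A: "(\<Sum>x\<in>SK (Suc K). 1 / real_of_int (mx x) ^ 3) \<le> 24 - 24 / (real K + 1) + 12 / (real K + 1)^2"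
    using Suc.IH by linarith
  have B: "24 - 24 / (real K + 1) + 12 / (real K + 1)^2 \<le> 24 - 24 / (real (Suc K) + 1)"
  proof -
    define y where "y = real K"
    have y: "y \<ge> 0" by (simp add: y_def)
    have e: "24 / (y + 1) - 24 / (y + 2) = 24 / ((y+1)*(y+2))" using y by (simp add: field_simps)
    have "12 / (y + 1)^2 \<le> 24 / ((y+1)*(y+2))" using y
      by (simp add: divide_simps power2_eq_square)
    hence h: "12 / (real K + 1)^2 \<le> 24 / (real K + 1) - 24 / (real K + 2)"
      using e by (simp add: y_def)
    have s: "real (Suc K) + 1 = real K + 2" by simp
    show ?thesis unfolding s using h by linarith
  qed
  show ?case using A B by linarith
qed

lemma mx_sum_bound:
  assumes "finite F" "F \<subseteq> UNIV - {(0,0)}"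
  shows "(\<Sum>x\<in>F. 1 / real_of_int (mx x) ^ 3) \<le> 24"
proof -
  obtain K where K: "\<forall>x\<in>F. mx x \<le> int K"
  proof -
    have "\<exists>K. \<forall>x\<in>F. mx x \<le> int K"
      using assms(1)
    proof (induction F)
      case empty then show ?case by simp
    next
      case (insert a F)
      then obtain K where "\<forall>x\<in>F. mx x \<le> int K" by blast
      then show ?case
        by (intro exI[of _ "max K (nat (mx a))"]) (auto simp: mx_def)
    qed
    thus ?thesis using that by blast
  qed
  have sub: "F \<subseteq> SK K"
  proof
    fix x assume x: "x \<in> F"
    hence "x \<noteq> (0,0)" using assms by auto
    hence "1 \<le> mx x" by (cases x) (auto simp: mx_def max_def)
    thus "x \<in> SK K" using K x by (auto simp: SK_def)
  qed
  have "(\<Sum>x\<in>F. 1 / real_of_int (mx x) ^ 3) \<le> (\<Sum>x\<in>SK K. 1 / real_of_int (mx x) ^ 3)"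
    by (rule sum_mono2[OF SK_finite sub]) (auto simp: mx_def)
  also have "\<dots> \<le> 24" using SK_sum[of K] by (smt (verit) divide_nonneg_nonneg of_nat_0_le_iff)
  finally show ?thesis .
qed

lemma mx_summable: "(\<lambda>x. 1 / real_of_int (mx x) ^ 3) summable_on (UNIV - {(0,0)})"
  by (rule nonneg_bdd_above_summable_on) (auto intro!: bdd_aboveI[of _ 24] mx_sum_bound)

lemma locfin_avoid:
  fixes S :: "'a::metric_space set"
  assumes "finite (S \<inter> cball z 1)"
  shows "\<exists>r>0. \<forall>y\<in>S. y \<noteq> z \<longrightarrow> r \<le> dist z y"
proof -
  obtain d where d: "d > 0" "\<forall>x\<in>S \<inter> cball z 1. x \<noteq> z \<longrightarrow> d \<le> dist z x"
    using finite_set_avoid[OF assms, of z] by blast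
  show ?thesis
  proof (intro exI[of _ "min d 1"] conjI ballI impI)
    fix y assume "y \<in> S" "y \<noteq> z"
    thus "min d 1 \<le> dist z y" using d by (cases "dist z y \<le> 1") (auto simp: dist_commute)
  qed (use d in auto)
qed

lemma locfin_open:
  fixes S :: "'a::metric_space set"
  assumes "\<And>z. finite (S \<inter> cball z 1)"
  shows "open (- S)"
  unfolding open_contains_ball
proof
  fix z assume "z \<in> - S"
  obtain r where r: "r > 0" "\<forall>y\<in>S. y \<noteq> z \<longrightarrow> r \<le> dist z y"
    using locfin_avoid[OF assms] by blast
  have "ball z r \<subseteq> - S" using r \<open>z \<in> - S\<close> by (auto simp: dist_commute)
  thus "\<exists>e>0. ball z e \<subseteq> - S" using r by blast
qed

locale wlat =
  fixes w1 w2 :: complex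
  assumes nd: "nondeg_periods w1 w2"
begin

abbreviation "L \<equiv> lattice w1 w2"

definition lp :: "int \<times> int \<Rightarrow> complex" where
  "lp x = of_int (fst x) * w1 + of_int (snd x) * w2"

lemma L_eq: "L = range lp"
  unfolding lattice_def lp_def by (auto simp: image_def)

definition D where "D = Im (cnj w1 * w2)"

lemma w1_nz: "w1 \<noteq> 0" and w2_nz: "w2 \<noteq> 0" and D_nz: "D \<noteq> 0"
  using nd by (auto simp: nondeg_periods_def D_def Im_divide algebra_simps)

lemma Im1: "Im (cnj w1 * (of_real a * w1 + of_real b * w2)) = b * D"
  by (simp add: D_def algebra_simps)
lemma Im2: "Im (cnj w2 * (of_real a * w1 + of_real b * w2)) = - a * D"
  by (simp add: D_def algebra_simps)

definition cc where "cc = \<bar>D\<bar> / (cmod w1 + cmod w2)"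

lemma cc_pos: "cc > 0"
  using D_nz w1_nz unfolding cc_def by (simp add: add_pos_nonneg)

lemma coord_bound:
  assumes "z = of_real a * w1 + of_real b * w2"
  shows "cc * \<bar>a\<bar> \<le> cmod z" "cc * \<bar>b\<bar> \<le> cmod z"
proof -
  have pos: "cmod w1 + cmod w2 > 0" using w1_nz by (simp add: add_pos_nonneg)
  have "\<bar>b\<bar> * \<bar>D\<bar> = \<bar>Im (cnj w1 * z)\<bar>" using Im1[of a b] assms by (simp add: abs_mult)
  also have "\<dots> \<le> cmod (cnj w1 * z)" by (rule abs_Im_le_cmod)
  also have "\<dots> = cmod w1 * cmod z" by (simp add: norm_mult)
  also have "\<dots> \<le> (cmod w1 + cmod w2) * cmod z" by (intro mult_right_mono) auto
  finally have "\<bar>b\<bar> * \<bar>D\<bar> \<le> (cmod w1 + cmod w2) * cmod z" .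
  thus "cc * \<bar>b\<bar> \<le> cmod z" using pos unfolding cc_def by (simp add: field_simps)
  have "\<bar>a\<bar> * \<bar>D\<bar> = \<bar>Im (cnj w2 * z)\<bar>" using Im2[of a b] assms by (simp add: abs_mult)
  also have "\<dots> \<le> cmod (cnj w2 * z)" by (rule abs_Im_le_cmod)
  also have "\<dots> = cmod w2 * cmod z" by (simp add: norm_mult)
  also have "\<dots> \<le> (cmod w1 + cmod w2) * cmod z" by (intro mult_right_mono) auto
  finally have "\<bar>a\<bar> * \<bar>D\<bar> \<le> (cmod w1 + cmod w2) * cmod z" .
  thus "cc * \<bar>a\<bar> \<le> cmod z" using pos unfolding cc_def by (simp add: field_simps)
qed

lemma indep:
  assumes "of_real a * w1 + of_real b * w2 = 0"
  shows "a = 0" "b = 0"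
  using coord_bound[OF assms[symmetric]] cc_pos
  by (simp_all add: mult_le_0_iff)

lemma lp_bound: "cc * real_of_int (mx x) \<le> cmod (lp x)"
proof -
  have "lp x = of_real (of_int (fst x)) * w1 + of_real (of_int (snd x)) * w2"
    by (simp add: lp_def)
  from coord_bound[OF this] show ?thesis
    by (simp add: mx_def max_def)
qed

lemma lp_inj: "inj lp"
proof (rule injI)
  fix x y assume "lp x = lp y"
  hence "of_real (of_int (fst x - fst y)) * w1 + of_real (of_int (snd x - snd y)) * w2 = 0"
    by (simp add: lp_def algebra_simps)
  from indep[OF this] show "x = y" by (simp add: prod_eq_iff)
qed

lemma lp0: "lp (0,0) = 0" by (simp add: lp_def)

lemma L_countable: "countable L"
  unfolding L_eq by simp

lemma L_0: "0 \<in> L" and L_w1: "w1 \<in> L" and L_w2: "w2 \<in> L"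
proof -
  have "0 = of_int 0 * w1 + of_int 0 * w2" "w1 = of_int 1 * w1 + of_int 0 * w2"
    "w2 = of_int 0 * w1 + of_int 1 * w2" by simp_all
  thus "0 \<in> L" "w1 \<in> L" "w2 \<in> L" unfolding lattice_def by blast+
qed

lemma L_add: "a \<in> L \<Longrightarrow> b \<in> L \<Longrightarrow> a + b \<in> L"
  unfolding lattice_def
  by clarify (rule_tac x="m+ma" in exI, rule_tac x="n+na" in exI, simp add: algebra_simps)

lemma L_uminus: "a \<in> L \<Longrightarrow> - a \<in> L"
  unfolding lattice_def
  by clarify (rule_tac x="-m" in exI, rule_tac x="-n" in exI, simp add: algebra_simps)

lemma L_diff: "a \<in> L \<Longrightarrow> b \<in> L \<Longrightarrow> a - b \<in> L"
  using L_add[OF _ L_uminus, of a b] by simp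

lemma L_uminus_iff: "- a \<in> L \<longleftrightarrow> a \<in> L"
  using L_uminus[of a] L_uminus[of "-a"] by auto

lemma L_shift: "\<omega> \<in> L \<Longrightarrow> z + \<omega> \<in> L \<longleftrightarrow> z \<in> L"
  using L_add[of "z+\<omega>" "-\<omega>"] L_add[of z \<omega>] L_uminus[of \<omega>] by auto

lemma L_sep: "w \<in> L \<Longrightarrow> w \<noteq> 0 \<Longrightarrow> cc \<le> cmod w"
proof -
  assume "w \<in> L" "w \<noteq> 0"
  then obtain x where x: "w = lp x" "x \<noteq> (0,0)" unfolding L_eq using lp0 by auto
  hence "1 \<le> mx x" by (cases x) (auto simp: mx_def max_def)
  hence "cc * 1 \<le> cc * real_of_int (mx x)" using cc_pos by (intro mult_left_mono) auto
  thus ?thesis using lp_bound[of x] x by simp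
qed

lemma L_finite: "finite (L \<inter> cball z R)"
proof -
  define N where "N = \<lceil>(cmod z + R) / cc\<rceil>"
  have "L \<inter> cball z R \<subseteq> lp ` ({-N..N} \<times> {-N..N})"
  proof
    fix w assume w: "w \<in> L \<inter> cball z R"
    then obtain x where x: "w = lp x" unfolding L_eq by auto
    have "cmod w \<le> cmod z + R" using w norm_triangle_ineq2[of w z]
      by (auto simp: dist_norm norm_minus_commute)
    hence "cc * real_of_int (mx x) \<le> cmod z + R" using lp_bound[of x] x by simp
    hence "real_of_int (mx x) \<le> (cmod z + R) / cc" using cc_pos by (simp add: field_simps)
    hence "mx x \<le> N" unfolding N_def by linarith
    hence "x \<in> {-N..N} \<times> {-N..N}" by (cases x) (auto simp: mx_def)
    thus "w \<in> lp ` ({-N..N} \<times> {-N..N})" using x by auto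
  qed
  thus ?thesis by (rule finite_subset) auto
qed

lemma L_open_compl: "open (- L)"
  by (rule locfin_open) (rule L_finite)

lemma L0_open_compl: "open (- (L - {0}))"
proof -
  have "- (L - {0}) = - L \<union> ball 0 cc"
  proof
    show "- (L - {0}) \<subseteq> - L \<union> ball 0 cc" using cc_pos by auto
    show "- L \<union> ball 0 cc \<subseteq> - (L - {0})"
    proof
      fix x assume x: "x \<in> - L \<union> ball 0 cc"
      show "x \<in> - (L - {0})"
      proof (cases "x \<in> L \<and> x \<noteq> 0")
        case True
        hence "cc \<le> cmod x" using L_sep by auto
        thus ?thesis using x True by (auto simp: dist_norm)
      qed auto
    qed
  qed
  thus ?thesis using L_open_compl by auto
qed

lemma L_connected_compl: "connected (- L)"
  using connected_open_diff_countable[of UNIV L] L_countable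
  by (simp add: Compl_eq_Diff_UNIV connected_UNIV)

lemma bij_lp: "bij_betw lp (UNIV - {(0,0)}) (L - {0})"
proof -
  have "lp ` (UNIV - {(0,0)}) = range lp - {lp (0,0)}"
    using lp_inj by (auto simp: inj_eq)
  thus ?thesis unfolding bij_betw_def L_eq lp0 using lp_inj by (auto intro: inj_on_subset)
qed

lemma L_summable3: "(\<lambda>w. 1 / cmod w ^ 3) summable_on (L - {0})"
proof -
  have "(\<lambda>x. 1 / cmod (lp x) ^ 3) summable_on (UNIV - {(0,0)})"
  proof (rule summable_on_comparison_test)
    show "(\<lambda>x. (1 / cc ^ 3) * (1 / real_of_int (mx x) ^ 3)) summable_on (UNIV - {(0,0)})"
      by (rule summable_on_cmult_right[OF mx_summable])
  next
    fix x assume x: "x \<in> UNIV - {(0::int,0::int)}"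
    hence "1 \<le> mx x" by (cases x) (auto simp: mx_def max_def)
    hence pos: "0 < cc * real_of_int (mx x)" using cc_pos by simp
    have "1 / cmod (lp x) ^ 3 \<le> 1 / (cc * real_of_int (mx x)) ^ 3"
      using pos lp_bound[of x] by (intro divide_left_mono power_mono mult_pos_pos) auto
    thus "1 / cmod (lp x) ^ 3 \<le> (1 / cc ^ 3) * (1 / real_of_int (mx x) ^ 3)"
      by (simp add: power_mult_distrib)
  qed simp
  thus ?thesis using summable_on_reindex_bij_betw[OF bij_lp, of "\<lambda>w. 1 / cmod w ^ 3"] by simp
qed

lemma L_summable:
  assumes "n \<ge> 3"
  shows "(\<lambda>w. 1 / cmod w ^ n) summable_on (L - {0})"
proof (rule summable_on_comparison_test)
  show "(\<lambda>w. (1 / cc ^ (n-3)) * (1 / cmod w ^ 3)) summable_on (L - {0})"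
    by (rule summable_on_cmult_right[OF L_summable3])
next
  fix w assume w: "w \<in> L - {0}"
  hence c: "cc \<le> cmod w" using L_sep by auto
  have "cmod w ^ n = cmod w ^ (n-3) * cmod w ^ 3" using assms by (simp add: power_add[symmetric])
  moreover have "cc ^ (n-3) \<le> cmod w ^ (n-3)" using c cc_pos by (intro power_mono) auto
  ultimately have "cc ^ (n-3) * cmod w ^ 3 \<le> cmod w ^ n" by (simp add: mult_right_mono)
  moreover have "0 < cc ^ (n-3) * cmod w ^ 3" using cc_pos c by (intro mult_pos_pos zero_less_power) auto
  ultimately have "1 / cmod w ^ n \<le> 1 / (cc ^ (n-3) * cmod w ^ 3)"
    by (intro divide_left_mono) auto
  thus "1 / cmod w ^ n \<le> (1 / cc ^ (n-3)) * (1 / cmod w ^ 3)"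
    by simp
qed simp

end

lemma infsum_split_finite:
  fixes f :: "'a \<Rightarrow> 'b::banach"
  assumes "f summable_on A" "finite X" "X \<subseteq> A"
  shows "infsum f A = sum f X + infsum f (A - X)"
proof -
  have "A = X \<union> (A - X)" using assms by auto
  hence "infsum f A = infsum f (X \<union> (A - X))" by simp
  also have "\<dots> = infsum f X + infsum f (A - X)"
    by (rule infsum_Un_disjoint) (use assms in \<open>auto intro: summable_on_finite summable_on_subset_banach\<close>)
  finally show ?thesis using assms by (simp add: infsum_finite)
qed

lemma uniform_limit_infsum:
  fixes f :: "'a \<Rightarrow> 'c \<Rightarrow> 'b::banach"
  assumes M: "M summable_on A" and Mnn: "\<And>w. w \<in> A \<Longrightarrow> 0 \<le> M w"
    and bd: "\<And>w z. w \<in> A \<Longrightarrow> z \<in> S \<Longrightarrow> norm (f w z) \<le> M w"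
  shows "uniform_limit S (\<lambda>X z. \<Sum>w\<in>X. f w z) (\<lambda>z. \<Sum>\<^sub>\<infinity>w\<in>A. f w z) (finite_subsets_at_top A)"
  unfolding uniform_limit_iff
proof (intro allI impI)
  fix e :: real assume e: "e > 0"
  have "(M has_sum infsum M A) A" using M by (rule has_sum_infsum)
  hence "(sum M \<longlongrightarrow> infsum M A) (finite_subsets_at_top A)" by (simp add: has_sum_def)
  hence ev: "\<forall>\<^sub>F X in finite_subsets_at_top A. dist (sum M X) (infsum M A) < e"
    using e by (rule tendstoD)
  have ev2: "\<forall>\<^sub>F X in finite_subsets_at_top A. finite X \<and> X \<subseteq> A"
    by (rule eventually_finite_subsets_at_top_weakI) auto
  show "\<forall>\<^sub>F X in finite_subsets_at_top A. \<forall>z\<in>S. dist (\<Sum>w\<in>X. f w z) (\<Sum>\<^sub>\<infinity>w\<in>A. f w z) < e"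
    using ev ev2
  proof eventually_elim
    case (elim X)
    hence X: "finite X" "X \<subseteq> A" by auto
    show ?case
    proof
      fix z assume z: "z \<in> S"
      have Ma: "(\<lambda>w. norm (M w)) summable_on A" using summable_on_cong[of A "\<lambda>w. norm (M w)" M] Mnn M by simp
      have fs: "(\<lambda>w. norm (f w z)) summable_on A"
        by (rule Infinite_Sum.abs_summable_on_comparison_test'[OF Ma]) (use bd z Mnn in auto)
      hence fs': "(\<lambda>w. f w z) summable_on A" by (rule Infinite_Sum.abs_summable_summable)
      have "infsum (\<lambda>w. f w z) A = sum (\<lambda>w. f w z) X + infsum (\<lambda>w. f w z) (A - X)"
        by (rule infsum_split_finite[OF fs' X])
      hence "dist (\<Sum>w\<in>X. f w z) (\<Sum>\<^sub>\<infinity>w\<in>A. f w z) = norm (infsum (\<lambda>w. f w z) (A - X))"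
        by (simp add: dist_norm)
      also have "\<dots> \<le> infsum (\<lambda>w. norm (f w z)) (A - X)"
        by (rule norm_infsum_bound) (rule summable_on_subset_banach[OF fs], auto)
      also have "\<dots> \<le> infsum M (A - X)"
        by (rule infsum_mono) (auto intro: summable_on_subset_banach[OF fs] summable_on_subset_banach[OF M] bd z)
      also have "\<dots> = infsum M A - sum M X"
        using infsum_split_finite[OF M X] by simp
      also have "\<dots> < e"
      proof -
        have "sum M X \<le> infsum M A"
          using infsum_split_finite[OF M X] infsum_nonneg[of "A - X" M] Mnn by auto
        thus ?thesis using elim by (simp add: dist_real_def)
      qed
      finally show "dist (\<Sum>w\<in>X. f w z) (\<Sum>\<^sub>\<infinity>w\<in>A. f w z) < e" .
    qed
  qed
qed

lemma infsum_has_field_derivative: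
  fixes f f' :: "'a \<Rightarrow> complex \<Rightarrow> complex"
  assumes r: "r > 0"
    and der: "\<And>w z. w \<in> A \<Longrightarrow> z \<in> cball z0 r \<Longrightarrow> (f w has_field_derivative f' w z) (at z)"
    and M: "M summable_on A" and Mnn: "\<And>w. w \<in> A \<Longrightarrow> 0 \<le> M w"
    and bd: "\<And>w z. w \<in> A \<Longrightarrow> z \<in> cball z0 r \<Longrightarrow> norm (f w z) \<le> M w"
  shows "((\<lambda>z. \<Sum>\<^sub>\<infinity>w\<in>A. f w z) has_field_derivative (\<Sum>\<^sub>\<infinity>w\<in>A. f' w z0)) (at z0)"
    and "(\<lambda>w. f' w z0) summable_on A"
proof -
  have ul: "uniform_limit (cball z0 r) (\<lambda>X z. \<Sum>w\<in>X. f w z) (\<lambda>z. \<Sum>\<^sub>\<infinity>w\<in>A. f w z) (finite_subsets_at_top A)"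
    by (rule uniform_limit_infsum[OF M Mnn bd])
  have ev: "\<forall>\<^sub>F X in finite_subsets_at_top A. continuous_on (cball z0 r) (\<lambda>z. \<Sum>w\<in>X. f w z) \<and>
      (\<forall>z\<in>ball z0 r. ((\<lambda>z. \<Sum>w\<in>X. f w z) has_field_derivative (\<Sum>w\<in>X. f' w z)) (at z))"
  proof (rule eventually_finite_subsets_at_top_weakI, intro conjI ballI)
    fix X assume X: "finite X" "X \<subseteq> A"
    show "continuous_on (cball z0 r) (\<lambda>z. \<Sum>w\<in>X. f w z)"
    proof (intro continuous_on_sum continuous_at_imp_continuous_on ballI)
      fix w z assume "w \<in> X" "z \<in> cball z0 r"
      thus "isCont (f w) z" using der X by (meson DERIV_isCont subsetD)
    qed
    fix z assume "z \<in> ball z0 r"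
    thus "((\<lambda>z. \<Sum>w\<in>X. f w z) has_field_derivative (\<Sum>w\<in>X. f' w z)) (at z)"
      using der X by (intro DERIV_sum) auto
  qed
  obtain g' where g': "\<And>z. z \<in> ball z0 r \<Longrightarrow>
      ((\<lambda>z. \<Sum>\<^sub>\<infinity>w\<in>A. f w z) has_field_derivative g' z) (at z) \<and>
      ((\<lambda>X. \<Sum>w\<in>X. f' w z) \<longlongrightarrow> g' z) (finite_subsets_at_top A)"
    using has_complex_derivative_uniform_limit[OF ev ul _ r] finite_subsets_at_top_neq_bot
    by (metis trivial_limit_def)
  have z0: "z0 \<in> ball z0 r" using r by simp
  have hs: "((\<lambda>w. f' w z0) has_sum g' z0) A" using g'[OF z0] by (simp add: has_sum_def)
  thus "(\<lambda>w. f' w z0) summable_on A" by (rule has_sum_imp_summable)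
  have "infsum (\<lambda>w. f' w z0) A = g' z0" using hs by (rule infsumI)
  thus "((\<lambda>z. \<Sum>\<^sub>\<infinity>w\<in>A. f w z) has_field_derivative (\<Sum>\<^sub>\<infinity>w\<in>A. f' w z0)) (at z0)"
    using g'[OF z0] by simp
qed

lemma pt_alg: "z \<noteq> w \<Longrightarrow> w \<noteq> 0 \<Longrightarrow> 1/(z-w)^2 - 1/w^2 = z*(2*w - z) / ((z-w)^2 * w^2)"
  for z w :: complex
proof -
  assume a: "z \<noteq> w" "w \<noteq> 0"
  hence "(z-w)^2 \<noteq> 0" by simp
  hence "1/(z-w)^2 - 1/w^2 = (w^2 - (z-w)^2) / ((z-w)^2 * w^2)" using a by (simp add: divide_simps)
  also have "w^2 - (z-w)^2 = z*(2*w - z)" by (simp add: power2_eq_square algebra_simps)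
  finally show ?thesis .
qed
lemma zt_alg: "z \<noteq> w \<Longrightarrow> w \<noteq> 0 \<Longrightarrow> 1/(z-w) + 1/w + z/w^2 = z^2 / ((z-w) * w^2)"
  for z w :: complex by (simp add: field_simps power2_eq_square)

lemma bound_pt:
  fixes z w :: complex
  assumes k: "\<kappa> > 0" "\<kappa> * cmod w \<le> cmod (z - w)" and w: "c > 0" "c \<le> cmod w" and R: "cmod z \<le> R"
  shows "cmod (1/(z-w)^2 - 1/w^2) \<le> (R * (2 + R/c) / \<kappa>^2) / cmod w ^ 3"
proof -
  have wnz: "w \<noteq> 0" using w by auto
  have zw: "z \<noteq> w"
  proof
    assume "z = w"
    hence "\<kappa> * cmod w \<le> 0" using k by simp
    moreover have "\<kappa> * cmod w > 0" using k wnz by simp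
    ultimately show False by linarith
  qed
  have R0: "R \<ge> 0" using R norm_ge_zero order_trans by blast
  have "cmod (1/(z-w)^2 - 1/w^2) = cmod z * cmod (2*w - z) / (cmod (z-w)^2 * cmod w^2)"
    by (simp add: pt_alg[OF zw wnz] norm_mult norm_divide norm_power)
  also have "\<dots> \<le> (R * (R/c * cmod w + 2 * cmod w)) / ((\<kappa> * cmod w)^2 * cmod w^2)"
  proof (rule frac_le)
    have "cmod (2*w - z) \<le> 2 * cmod w + cmod z"
      using norm_triangle_ineq4[of "2*w" z] by (simp add: norm_mult)
    also have "\<dots> \<le> 2 * cmod w + R" using R by simp
    also have "R \<le> R/c * cmod w"
    proof -
      have "R * 1 \<le> R * (cmod w / c)" using w R0 by (intro mult_left_mono) (auto simp: field_simps)
      thus ?thesis by simp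
    qed
    finally have "cmod (2*w - z) \<le> R/c * cmod w + 2 * cmod w" by simp
    thus "cmod z * cmod (2*w - z) \<le> R * (R/c * cmod w + 2 * cmod w)"
      using R R0 by (intro mult_mono) auto
    show "0 \<le> R * (R/c * cmod w + 2 * cmod w)" using R0 w by simp
    show "0 < (\<kappa> * cmod w)^2 * cmod w^2" using k wnz by simp
    show "(\<kappa> * cmod w)^2 * cmod w^2 \<le> cmod (z-w)^2 * cmod w^2"
      using k by (intro mult_right_mono power_mono) auto
  qed
  also have "\<dots> = (R * (2 + R/c) / \<kappa>^2) / cmod w ^ 3"
    using wnz k by (simp add: field_simps power2_eq_square power3_eq_cube)
  finally show ?thesis .
qed

lemma bound_zt:
  fixes z w :: complex
  assumes k: "\<kappa> > 0" "\<kappa> * cmod w \<le> cmod (z - w)" and w: "c > 0" "c \<le> cmod w" and R: "cmod z \<le> R"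
  shows "cmod (1/(z-w) + 1/w + z/w^2) \<le> (R^2 / \<kappa>) / cmod w ^ 3"
proof -
  have wnz: "w \<noteq> 0" using w by auto
  have zw: "z \<noteq> w"
  proof
    assume "z = w"
    hence "\<kappa> * cmod w \<le> 0" using k by simp
    moreover have "\<kappa> * cmod w > 0" using k wnz by simp
    ultimately show False by linarith
  qed
  have "cmod (1/(z-w) + 1/w + z/w^2) = cmod z ^ 2 / (cmod (z-w) * cmod w^2)"
    by (simp add: zt_alg[OF zw wnz] norm_mult norm_divide norm_power)
  also have "\<dots> \<le> R^2 / ((\<kappa> * cmod w) * cmod w^2)"
    using k R wnz by (intro frac_le power_mono mult_right_mono) auto
  also have "\<dots> = (R^2 / \<kappa>) / cmod w ^ 3"
    using wnz k by (simp add: field_simps power2_eq_square power3_eq_cube)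
  finally show ?thesis .
qed

lemma bound_qt:
  fixes z w :: complex
  assumes k: "\<kappa> > 0" "\<kappa> * cmod w \<le> cmod (z - w)" and w: "c > 0" "c \<le> cmod w"
  shows "cmod (1/(z-w)^3) \<le> (1 / \<kappa>^3) / cmod w ^ 3"
proof -
  have wnz: "w \<noteq> 0" using w by auto
  have p: "0 < \<kappa> * cmod w" using k wnz by simp
  have "cmod (1/(z-w)^3) = 1 / cmod (z-w)^3" by (simp add: norm_divide norm_power)
  also have "\<dots> \<le> 1 / (\<kappa> * cmod w)^3"
    using k p by (intro divide_left_mono power_mono zero_less_power mult_pos_pos) auto
  also have "\<dots> = (1 / \<kappa>^3) / cmod w ^ 3" by (simp add: power_mult_distrib)
  finally show ?thesis .
qed

lemma pt_deriv0: "z \<noteq> w \<Longrightarrow> ((\<lambda>z. 1/(z-w)^2 - 1/w^2) has_field_derivative (-2 * (1/(z-w)^3))) (at z)"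
  for z w :: complex
proof -
  assume "z \<noteq> w" hence d: "z - w \<noteq> 0" by simp
  have h1: "((\<lambda>x. (x-w)^2) has_field_derivative (2*(z-w))) (at z)"
    by (auto intro!: derivative_eq_intros simp: algebra_simps)
  have h2: "((\<lambda>x. inverse ((x-w)^2)) has_field_derivative (- ((2*(z-w)) * inverse (((z-w)^2) ^ Suc (Suc 0))))) (at z)"
    by (rule DERIV_inverse_fun[OF h1]) (use d in simp)
  have h3: "((\<lambda>x. inverse ((x-w)^2) - 1/w^2) has_field_derivative (- ((2*(z-w)) * inverse (((z-w)^2) ^ Suc (Suc 0))) - 0)) (at z)"
    by (rule DERIV_diff[OF h2 DERIV_const])
  have aux: "\<And>u::complex. u \<noteq> 0 \<Longrightarrow> - ((2*u) * inverse ((u^2) ^ Suc (Suc 0))) - 0 = -2 * (1/u^3)"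
    by (simp add: field_simps power2_eq_square power3_eq_cube)
  have "- ((2*(z-w)) * inverse (((z-w)^2) ^ Suc (Suc 0))) - 0 = -2 * (1/(z-w)^3)"
    by (rule aux[OF d])
  with h3 show ?thesis by (simp add: divide_inverse)
qed

lemma zt_deriv0: "z \<noteq> w \<Longrightarrow> w \<noteq> 0 \<Longrightarrow> ((\<lambda>z. 1/(z-w) + 1/w + z/w^2) has_field_derivative (- (1/(z-w)^2 - 1/w^2))) (at z)"
  for z w :: complex
proof -
  assume "z \<noteq> w" "w \<noteq> 0" hence d: "z - w \<noteq> 0" "w \<noteq> 0" by simp_all
  have h1: "((\<lambda>x. x - w) has_field_derivative 1) (at z)"
    by (auto intro!: derivative_eq_intros)
  have h2: "((\<lambda>x. inverse (x-w)) has_field_derivative (- (1 * inverse ((z-w) ^ Suc (Suc 0))))) (at z)"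
    by (rule DERIV_inverse_fun[OF h1]) (use d in simp)
  have h3: "((\<lambda>x. inverse (x-w) + 1/w + x * (1/w^2)) has_field_derivative (- (1 * inverse ((z-w) ^ Suc (Suc 0))) + 0 + 1 * (1/w^2))) (at z)"
    by (intro DERIV_add h2 DERIV_const DERIV_cmult_right DERIV_ident)
  have "- (1 * inverse ((z-w) ^ Suc (Suc 0))) + 0 + 1 * (1/w^2) = - (1/(z-w)^2 - 1/w^2)"
    using d by (simp add: field_simps power2_eq_square)
  with h3 show ?thesis by (simp add: divide_inverse)
qed

context wlat
begin

abbreviation "L0 \<equiv> L - {0}"

definition pt :: "complex \<Rightarrow> complex \<Rightarrow> complex" where "pt w z = 1/(z-w)^2 - 1/w^2"
definition zt :: "complex \<Rightarrow> complex \<Rightarrow> complex" where "zt w z = 1/(z-w) + 1/w + z/w^2"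
definition qt :: "complex \<Rightarrow> complex \<Rightarrow> complex" where "qt w z = 1/(z-w)^3"

definition "P z = (\<Sum>\<^sub>\<infinity>w\<in>L0. pt w z)"
definition "Zs z = (\<Sum>\<^sub>\<infinity>w\<in>L0. zt w z)"
definition "Q z = (\<Sum>\<^sub>\<infinity>w\<in>L0. qt w z)"

lemma wp_eq: "wp w1 w2 z = 1/z^2 + P z" by (simp add: wp_def P_def pt_def)
lemma wzeta_eq: "wzeta w1 w2 z = 1/z + Zs z" by (simp add: wzeta_def Zs_def zt_def)

lemma local_bounds:
  assumes z0: "z0 \<notin> L0"
  obtains r K where "r > 0" "K \<ge> 0" "\<And>z. z \<in> cball z0 r \<Longrightarrow> z \<notin> L0"
    "\<And>z w. z \<in> cball z0 r \<Longrightarrow> w \<in> L0 \<Longrightarrow>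
       cmod (pt w z) \<le> K / cmod w ^ 3 \<and> cmod (zt w z) \<le> K / cmod w ^ 3 \<and> cmod (qt w z) \<le> K / cmod w ^ 3"
proof -
  have "z0 \<in> - L0" using z0 by blast
  then obtain e where e: "e > 0" "ball z0 e \<subseteq> - L0"
    using L0_open_compl by (meson open_contains_ball)
  define r where "r = e / 2"
  define R where "R = cmod z0 + r"
  define \<kappa> where "\<kappa> = min (1/2) (r / (2*R))"
  have r: "r > 0" using e by (simp add: r_def)
  have Rp: "R > 0" using r by (simp add: R_def add_nonneg_pos)
  have kp: "\<kappa> > 0" using r Rp by (simp add: \<kappa>_def)
  define K where "K = R * (2 + R/cc) / \<kappa>^2 + R^2 / \<kappa> + 1 / \<kappa>^3"
  have K1: "R * (2 + R/cc) / \<kappa>^2 \<ge> 0" "R^2 / \<kappa> \<ge> 0" "1 / \<kappa>^3 \<ge> 0"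
    using Rp kp cc_pos by auto
  have K0: "K \<ge> 0" using K1 by (simp add: K_def)
  have sub: "z \<notin> L0" if "z \<in> cball z0 r" for z
  proof -
    have "z \<in> ball z0 e" using that e by (auto simp: r_def)
    thus ?thesis using e by auto
  qed
  have key: "cmod (pt w z) \<le> K / cmod w ^ 3 \<and> cmod (zt w z) \<le> K / cmod w ^ 3 \<and> cmod (qt w z) \<le> K / cmod w ^ 3"
    if z: "z \<in> cball z0 r" and w: "w \<in> L0" for z w
  proof -
    have wc: "cc \<le> cmod w" using L_sep w by auto
    have wnz: "w \<noteq> 0" using w by auto
    have zR: "cmod z \<le> R"
      using z norm_triangle_ineq2[of z z0] by (auto simp: R_def dist_norm norm_minus_commute)
    have dw: "r \<le> cmod (z - w)"
    proof -
      have "w \<notin> ball z0 e" using e w by auto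
      hence "e \<le> dist z0 w" by auto
      moreover have "dist z0 z \<le> r" using z by auto
      moreover have "dist z0 w \<le> dist z0 z + dist z w" by (rule dist_triangle)
      ultimately show ?thesis by (simp add: dist_norm r_def)
    qed
    have kw: "\<kappa> * cmod w \<le> cmod (z - w)"
    proof (cases "cmod w \<ge> 2 * R")
      case True
      have "cmod w - cmod z \<le> cmod (z - w)"
        using norm_triangle_ineq2[of w z] by (simp add: norm_minus_commute)
      moreover have "\<kappa> * cmod w \<le> 1/2 * cmod w" by (intro mult_right_mono) (auto simp: \<kappa>_def)
      ultimately show ?thesis using True zR by linarith
    next
      case False
      have "\<kappa> * cmod w \<le> (r / (2*R)) * cmod w" by (intro mult_right_mono) (auto simp: \<kappa>_def)
      also have "\<dots> \<le> (r / (2*R)) * (2 * R)" using False r Rp by (intro mult_left_mono) auto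
      also have "\<dots> = r" using Rp by simp
      finally show ?thesis using dw by linarith
    qed
    have b1: "cmod (pt w z) \<le> K / cmod w ^ 3"
    proof -
      have "cmod (pt w z) \<le> (R * (2 + R/cc) / \<kappa>^2) / cmod w ^ 3"
        unfolding pt_def by (rule bound_pt[OF kp kw cc_pos wc zR])
      also have "\<dots> \<le> K / cmod w ^ 3" using K1 wnz by (intro divide_right_mono) (auto simp: K_def)
      finally show ?thesis .
    qed
    have b2: "cmod (zt w z) \<le> K / cmod w ^ 3"
    proof -
      have "cmod (zt w z) \<le> (R^2 / \<kappa>) / cmod w ^ 3"
        unfolding zt_def by (rule bound_zt[OF kp kw cc_pos wc zR])
      also have "\<dots> \<le> K / cmod w ^ 3" using K1 wnz by (intro divide_right_mono) (auto simp: K_def)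
      finally show ?thesis .
    qed
    have b3: "cmod (qt w z) \<le> K / cmod w ^ 3"
    proof -
      have "cmod (qt w z) \<le> (1 / \<kappa>^3) / cmod w ^ 3"
        unfolding qt_def by (rule bound_qt[OF kp kw cc_pos wc])
      also have "\<dots> \<le> K / cmod w ^ 3" using K1 wnz by (intro divide_right_mono) (auto simp: K_def)
      finally show ?thesis .
    qed
    show ?thesis using b1 b2 b3 by blast
  qed
  show ?thesis by (rule that[OF r K0 sub key])
qed

lemma Ksummable: "(\<lambda>w. K / cmod w ^ 3) summable_on L0"
  using summable_on_cmult_right[OF L_summable3, of K] by simp

lemma pt_deriv: "z \<noteq> w \<Longrightarrow> (pt w has_field_derivative (-2 * qt w z)) (at z)"
  unfolding pt_def[abs_def] qt_def by (rule pt_deriv0)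

lemma zt_deriv: "z \<noteq> w \<Longrightarrow> w \<noteq> 0 \<Longrightarrow> (zt w has_field_derivative (- pt w z)) (at z)"
  unfolding pt_def zt_def[abs_def] by (rule zt_deriv0)

lemma summable_at:
  assumes "z \<notin> L0"
  shows "(\<lambda>w. pt w z) summable_on L0" "(\<lambda>w. zt w z) summable_on L0" "(\<lambda>w. qt w z) summable_on L0"
proof -
  obtain r K where rK: "r > 0" "K \<ge> 0"
    "\<And>z' w. z' \<in> cball z r \<Longrightarrow> w \<in> L0 \<Longrightarrow>
       cmod (pt w z') \<le> K / cmod w ^ 3 \<and> cmod (zt w z') \<le> K / cmod w ^ 3 \<and> cmod (qt w z') \<le> K / cmod w ^ 3"
    using local_bounds[OF assms] by metis
  have Ma: "(\<lambda>w. norm (K / cmod w ^ 3)) summable_on L0" using Ksummable[of K] rK by simp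
  have zz: "z \<in> cball z r" using rK by simp
  show "(\<lambda>w. pt w z) summable_on L0"
    by (rule Infinite_Sum.abs_summable_summable, rule Infinite_Sum.abs_summable_on_comparison_test'[OF Ma])
       (use rK(3)[OF zz] abs_of_nonneg[OF rK(2)] in auto)
  show "(\<lambda>w. zt w z) summable_on L0"
    by (rule Infinite_Sum.abs_summable_summable, rule Infinite_Sum.abs_summable_on_comparison_test'[OF Ma])
       (use rK(3)[OF zz] abs_of_nonneg[OF rK(2)] in auto)
  show "(\<lambda>w. qt w z) summable_on L0"
    by (rule Infinite_Sum.abs_summable_summable, rule Infinite_Sum.abs_summable_on_comparison_test'[OF Ma])
       (use rK(3)[OF zz] abs_of_nonneg[OF rK(2)] in auto)
qed

lemma P_deriv:
  assumes "z0 \<notin> L0"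
  shows "(P has_field_derivative (-2 * Q z0)) (at z0)"
proof -
  obtain r K where rK: "r > 0" "K \<ge> 0" "\<And>z. z \<in> cball z0 r \<Longrightarrow> z \<notin> L0"
    "\<And>z w. z \<in> cball z0 r \<Longrightarrow> w \<in> L0 \<Longrightarrow>
       cmod (pt w z) \<le> K / cmod w ^ 3 \<and> cmod (zt w z) \<le> K / cmod w ^ 3 \<and> cmod (qt w z) \<le> K / cmod w ^ 3"
    using local_bounds[OF assms] by metis
  have "((\<lambda>z. \<Sum>\<^sub>\<infinity>w\<in>L0. pt w z) has_field_derivative (\<Sum>\<^sub>\<infinity>w\<in>L0. -2 * qt w z0)) (at z0)"
  proof (rule infsum_has_field_derivative(1)[OF rK(1) _ Ksummable])
    fix w z assume "w \<in> L0" "z \<in> cball z0 r"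
    thus "(pt w has_field_derivative -2 * qt w z) (at z)" using rK(3) by (intro pt_deriv) auto
  qed (use rK in auto)
  moreover have "(\<Sum>\<^sub>\<infinity>w\<in>L0. -2 * qt w z0) = -2 * Q z0"
    unfolding Q_def by (rule infsum_cmult_right[OF summable_at(3)[OF assms]])
  ultimately show ?thesis by (simp add: P_def[abs_def])
qed

lemma Zs_deriv:
  assumes "z0 \<notin> L0"
  shows "(Zs has_field_derivative (- P z0)) (at z0)"
proof -
  obtain r K where rK: "r > 0" "K \<ge> 0" "\<And>z. z \<in> cball z0 r \<Longrightarrow> z \<notin> L0"
    "\<And>z w. z \<in> cball z0 r \<Longrightarrow> w \<in> L0 \<Longrightarrow>
       cmod (pt w z) \<le> K / cmod w ^ 3 \<and> cmod (zt w z) \<le> K / cmod w ^ 3 \<and> cmod (qt w z) \<le> K / cmod w ^ 3"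
    using local_bounds[OF assms] by metis
  have "((\<lambda>z. \<Sum>\<^sub>\<infinity>w\<in>L0. zt w z) has_field_derivative (\<Sum>\<^sub>\<infinity>w\<in>L0. - pt w z0)) (at z0)"
  proof (rule infsum_has_field_derivative(1)[OF rK(1) _ Ksummable])
    fix w z assume "w \<in> L0" "z \<in> cball z0 r"
    thus "(zt w has_field_derivative - pt w z) (at z)" using rK(3) by (intro zt_deriv) auto
  qed (use rK in auto)
  moreover have "(\<Sum>\<^sub>\<infinity>w\<in>L0. - pt w z0) = - P z0"
    unfolding P_def by (rule infsum_uminus)
  ultimately show ?thesis by (simp add: Zs_def[abs_def])
qed

lemma P_holo: "P holomorphic_on (- L0)"
  using P_deriv L0_open_compl by (auto simp: holomorphic_on_open field_differentiable_def)

lemma Zs_holo: "Zs holomorphic_on (- L0)"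
  using Zs_deriv L0_open_compl by (auto simp: holomorphic_on_open field_differentiable_def)

lemma wp_deriv:
  assumes "z \<notin> L"
  shows "(wp w1 w2 has_field_derivative (-2 / z^3 - 2 * Q z)) (at z)"
proof -
  have z0: "z \<noteq> 0" using assms L_0 by auto
  have "((\<lambda>z. 1/z^2 + P z) has_field_derivative (-2 / z^3 - 2 * Q z)) (at z)"
    using z0 assms P_deriv[of z]
    by (auto intro!: derivative_eq_intros simp: field_simps power2_eq_square power3_eq_cube)
  thus ?thesis by (simp add: wp_eq[abs_def])
qed

lemma wzeta_deriv:
  assumes "z \<notin> L"
  shows "(wzeta w1 w2 has_field_derivative (- wp w1 w2 z)) (at z)"
proof -
  have z0: "z \<noteq> 0" using assms L_0 by auto
  have "((\<lambda>z. 1/z + Zs z) has_field_derivative (- wp w1 w2 z)) (at z)"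
    using z0 assms Zs_deriv[of z]
    by (auto intro!: derivative_eq_intros simp: wp_eq field_simps power2_eq_square)
  thus ?thesis by (simp add: wzeta_eq[abs_def])
qed

lemma wp_holo: "wp w1 w2 holomorphic_on (- L)"
  using wp_deriv L_open_compl by (auto simp: holomorphic_on_open field_differentiable_def)

lemma wzeta_holo: "wzeta w1 w2 holomorphic_on (- L)"
  using wzeta_deriv L_open_compl by (auto simp: holomorphic_on_open field_differentiable_def)

lemma deriv_wp: "z \<notin> L \<Longrightarrow> deriv (wp w1 w2) z = -2 / z^3 - 2 * Q z"
  using wp_deriv DERIV_imp_deriv by blast

end

context wlat
begin

lemma bij_uminus_L0: "bij_betw uminus L0 L0"
  by (rule bij_betwI[of _ _ _ uminus]) (auto simp: L_uminus_iff)

lemma bij_uminus_L: "bij_betw uminus L L"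
  by (rule bij_betwI[of _ _ _ uminus]) (auto simp: L_uminus_iff)

lemma bij_shift_L: "\<omega> \<in> L \<Longrightarrow> bij_betw (\<lambda>w. w + \<omega>) L L"
  by (rule bij_betwI[of _ _ _ "\<lambda>w. w - \<omega>"]) (auto simp: L_shift L_diff)

lemma P_even: "P (-z) = P z"
proof -
  have "P (-z) = (\<Sum>\<^sub>\<infinity>w\<in>L0. pt (-w) z)"
    unfolding P_def
  proof (intro infsum_cong)
    fix w :: complex
    have "(- z - w)^2 = (z - - w)^2" by (simp add: power2_eq_square algebra_simps)
    thus "pt w (- z) = pt (- w) z" by (simp add: pt_def)
  qed
  also have "\<dots> = P z" unfolding P_def by (rule infsum_reindex_bij_betw[OF bij_uminus_L0])
  finally show ?thesis .
qed

lemma Zs_odd: "Zs (-z) = - Zs z"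
proof -
  have "Zs (-z) = (\<Sum>\<^sub>\<infinity>w\<in>L0. - zt (-w) z)"
    unfolding Zs_def
  proof (intro infsum_cong)
    fix w :: complex
    have a: "1 / (- z - w) = - (1 / (z - - w))"
    proof -
      have "- z - w = - (z - - w)" by simp
      thus ?thesis by (simp only:) (simp only: divide_minus_right)
    qed
    have b: "(-w)^2 = w^2" by simp
    show "zt w (- z) = - zt (- w) z"
      unfolding zt_def a b by simp
  qed
  also have "\<dots> = - (\<Sum>\<^sub>\<infinity>w\<in>L0. zt (-w) z)" by (rule infsum_uminus)
  also have "(\<Sum>\<^sub>\<infinity>w\<in>L0. zt (-w) z) = Zs z" unfolding Zs_def by (rule infsum_reindex_bij_betw[OF bij_uminus_L0])
  finally show ?thesis .
qed

definition "Qf z = (\<Sum>\<^sub>\<infinity>w\<in>L. 1 / (z - w)^3)"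

lemma Qf_odd: "Qf (-z) = - Qf z"
proof -
  have "Qf (-z) = (\<Sum>\<^sub>\<infinity>w\<in>L. - (1 / (z - (-w))^3))"
    unfolding Qf_def
  proof (intro infsum_cong)
    fix w :: complex
    have "(- z - w)^3 = - ((z - (-w))^3)" by (simp add: power3_eq_cube algebra_simps)
    thus "1 / (- z - w) ^ 3 = - (1 / (z - - w) ^ 3)" by simp
  qed
  also have "\<dots> = - (\<Sum>\<^sub>\<infinity>w\<in>L. (1 / (z - (-w))^3))" by (rule infsum_uminus)
  also have "(\<Sum>\<^sub>\<infinity>w\<in>L. (1 / (z - (-w))^3)) = Qf z"
    unfolding Qf_def by (rule infsum_reindex_bij_betw[OF bij_uminus_L, of "\<lambda>w. 1 / (z - w)^3"])
  finally show ?thesis .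
qed

lemma Qf_periodic: "\<omega> \<in> L \<Longrightarrow> Qf (z + \<omega>) = Qf z"
proof -
  assume om: "\<omega> \<in> L"
  have "Qf (z + \<omega>) = (\<Sum>\<^sub>\<infinity>w\<in>L. 1 / (z + \<omega> - w)^3)" by (simp add: Qf_def)
  also have "\<dots> = (\<Sum>\<^sub>\<infinity>w\<in>L. 1 / (z + \<omega> - (w + \<omega>))^3)"
    by (rule infsum_reindex_bij_betw[OF bij_shift_L[OF om], symmetric])
  also have "\<dots> = Qf z" by (simp add: Qf_def)
  finally show ?thesis .
qed

lemma L_insert: "L = insert 0 L0" using L_0 by auto

lemma Qf_eq: "z \<notin> L \<Longrightarrow> Qf z = 1 / z^3 + Q z"
proof -
  assume z: "z \<notin> L"
  hence "z \<notin> L0" by auto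
  from summable_at(3)[OF this] have s: "(\<lambda>w. 1 / (z - w)^3) summable_on L0" by (simp add: qt_def)
  have "Qf z = (\<Sum>\<^sub>\<infinity>w\<in>insert 0 L0. 1 / (z - w)^3)" unfolding Qf_def by (subst L_insert) simp
  also have "\<dots> = 1 / (z - 0)^3 + (\<Sum>\<^sub>\<infinity>w\<in>L0. 1 / (z - w)^3)"
    by (rule infsum_insert[OF s]) simp
  finally show ?thesis by (simp add: Q_def qt_def)
qed

lemma wp_deriv': "z \<notin> L \<Longrightarrow> (wp w1 w2 has_field_derivative (-2 * Qf z)) (at z)"
proof -
  assume z: "z \<notin> L"
  have e: "-2 * Qf z = -2 / z^3 - 2 * Q z" using Qf_eq[OF z] by (simp add: algebra_simps)
  show ?thesis unfolding e by (rule wp_deriv[OF z])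
qed

lemma deriv_wp': "z \<notin> L \<Longrightarrow> deriv (wp w1 w2) z = -2 * Qf z"
  using wp_deriv' DERIV_imp_deriv by blast

lemma wp_even: "wp w1 w2 (-z) = wp w1 w2 z"
  by (simp add: wp_eq P_even)

lemma wzeta_odd: "wzeta w1 w2 (-z) = - wzeta w1 w2 z"
  by (simp add: wzeta_eq Zs_odd)

lemma L_induct:
  assumes "\<omega> \<in> L" "Pr 0"
    "\<And>\<omega>. Pr \<omega> \<Longrightarrow> Pr (\<omega> + w1)" "\<And>\<omega>. Pr \<omega> \<Longrightarrow> Pr (\<omega> - w1)"
    "\<And>\<omega>. Pr \<omega> \<Longrightarrow> Pr (\<omega> + w2)" "\<And>\<omega>. Pr \<omega> \<Longrightarrow> Pr (\<omega> - w2)"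
  shows "Pr \<omega>"
proof -
  obtain m n where mn: "\<omega> = of_int m * w1 + of_int n * w2" using assms(1) unfolding lattice_def by auto
  have A: "Pr (of_int m' * w1)" for m'
  proof (induct m' rule: int_induct[where k=0])
    case base then show ?case using assms(2) by simp
  next
    case (step1 i) then show ?case using assms(3)[of "of_int i * w1"] by (simp add: algebra_simps)
  next
    case (step2 i) then show ?case using assms(4)[of "of_int i * w1"] by (simp add: algebra_simps)
  qed
  have B: "Pr (of_int m * w1 + of_int n' * w2)" for n'
  proof (induct n' rule: int_induct[where k=0])
    case base then show ?case using A by simp
  next
    case (step1 i) then show ?case using assms(5)[of "of_int m * w1 + of_int i * w2"] by (simp add: algebra_simps)
  next
    case (step2 i) then show ?case using assms(6)[of "of_int m * w1 + of_int i * w2"] by (simp add: algebra_simps)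
  qed
  show ?thesis using B mn by simp
qed

lemma periodic_ext:
  assumes E: "\<And>z \<omega>. \<omega> \<in> L \<Longrightarrow> z + \<omega> \<in> E \<longleftrightarrow> z \<in> E"
    and p1: "\<And>z. z \<notin> E \<Longrightarrow> f (z + w1) = f z"
    and p2: "\<And>z. z \<notin> E \<Longrightarrow> f (z + w2) = f z"
    and om: "\<omega> \<in> L" and z: "z \<notin> E"
  shows "f (z + \<omega>) = f z"
proof -
  have "\<forall>z. z \<notin> E \<longrightarrow> f (z + \<omega>) = f z"
  proof (rule L_induct[OF om])
    show "\<forall>z. z \<notin> E \<longrightarrow> f (z + 0) = f z" by simp
  next
    fix \<omega> assume IH: "\<forall>z. z \<notin> E \<longrightarrow> f (z + \<omega>) = f z"
    show "\<forall>z. z \<notin> E \<longrightarrow> f (z + (\<omega> + w1)) = f z"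
    proof (intro allI impI)
      fix z assume z: "z \<notin> E"
      have "z + \<omega> \<notin> E" if "\<omega> \<in> L" using E that z by blast
      have "f (z + (\<omega> + w1)) = f ((z + w1) + \<omega>)" by (simp add: algebra_simps)
      also have "\<dots> = f (z + w1)" using IH E[of w1 z] L_w1 z by auto
      also have "\<dots> = f z" using p1 z by simp
      finally show "f (z + (\<omega> + w1)) = f z" .
    qed
    show "\<forall>z. z \<notin> E \<longrightarrow> f (z + (\<omega> - w1)) = f z"
    proof (intro allI impI)
      fix z assume z: "z \<notin> E"
      have zz: "z - w1 \<notin> E" using E[of w1 "z - w1"] L_w1 z by auto
      have "f (z + (\<omega> - w1)) = f ((z - w1) + \<omega>)" by (simp add: algebra_simps)
      also have "\<dots> = f (z - w1)" using IH zz by auto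
      also have "\<dots> = f (z - w1 + w1)" using p1[OF zz] by simp
      finally show "f (z + (\<omega> - w1)) = f z" by simp
    qed
    show "\<forall>z. z \<notin> E \<longrightarrow> f (z + (\<omega> + w2)) = f z"
    proof (intro allI impI)
      fix z assume z: "z \<notin> E"
      have "f (z + (\<omega> + w2)) = f ((z + w2) + \<omega>)" by (simp add: algebra_simps)
      also have "\<dots> = f (z + w2)" using IH E[of w2 z] L_w2 z by auto
      also have "\<dots> = f z" using p2 z by simp
      finally show "f (z + (\<omega> + w2)) = f z" .
    qed
    show "\<forall>z. z \<notin> E \<longrightarrow> f (z + (\<omega> - w2)) = f z"
    proof (intro allI impI)
      fix z assume z: "z \<notin> E"
      have zz: "z - w2 \<notin> E" using E[of w2 "z - w2"] L_w2 z by auto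
      have "f (z + (\<omega> - w2)) = f ((z - w2) + \<omega>)" by (simp add: algebra_simps)
      also have "\<dots> = f (z - w2)" using IH zz by auto
      also have "\<dots> = f (z - w2 + w2)" using p2[OF zz] by simp
      finally show "f (z + (\<omega> - w2)) = f z" by simp
    qed
  qed
  thus ?thesis using z by blast
qed

lemma half_not_L: "w1 / 2 \<notin> L" "w2 / 2 \<notin> L"
proof -
  show "w1 / 2 \<notin> L"
  proof
    assume "w1 / 2 \<in> L"
    then obtain m n where "w1 / 2 = of_int m * w1 + of_int n * w2" unfolding lattice_def by auto
    hence "of_real (1/2 - of_int m) * w1 + of_real (- of_int n) * w2 = 0"
      by (simp add: algebra_simps)
    from indep(1)[OF this] have "(1/2::real) = of_int m" by simp
    hence "(1::real) = 2 * of_int m" by simp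
    hence "(1::int) = 2 * m" by linarith
    thus False by presburger
  qed
  show "w2 / 2 \<notin> L"
  proof
    assume "w2 / 2 \<in> L"
    then obtain m n where "w2 / 2 = of_int m * w1 + of_int n * w2" unfolding lattice_def by auto
    hence "of_real (- of_int m) * w1 + of_real (1/2 - of_int n) * w2 = 0"
      by (simp add: algebra_simps)
    from indep(2)[OF this] have "(1/2::real) = of_int n" by simp
    hence "(1::real) = 2 * of_int n" by simp
    hence "(1::int) = 2 * n" by linarith
    thus False by presburger
  qed
qed

lemma wp_periodic_gen:
  assumes om: "\<omega> \<in> {w1, w2}"
  shows "z \<notin> L \<Longrightarrow> wp w1 w2 (z + \<omega>) = wp w1 w2 z"
proof -
  have omL: "\<omega> \<in> L" using om L_w1 L_w2 by auto
  have cont: "continuous_on (- L) (\<lambda>z. wp w1 w2 (z + \<omega>) - wp w1 w2 z)"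
  proof -
    have "continuous_on (- L) (\<lambda>z. wp w1 w2 (z + \<omega>))"
    proof (rule continuous_on_compose2[of "- L" "wp w1 w2"])
      show "continuous_on (- L) (wp w1 w2)" using wp_holo holomorphic_on_imp_continuous_on by blast
      show "(\<lambda>z. z + \<omega>) ` (- L) \<subseteq> - L" using L_shift[OF omL] by auto
    qed (intro continuous_intros)
    moreover have "continuous_on (- L) (wp w1 w2)" using wp_holo holomorphic_on_imp_continuous_on by blast
    ultimately show ?thesis by (intro continuous_intros)
  qed
  have der: "\<forall>z\<in>- L - {}. ((\<lambda>z. wp w1 w2 (z + \<omega>) - wp w1 w2 z) has_field_derivative 0) (at z)"
  proof
    fix z assume "z \<in> - L - {}"
    hence z: "z \<notin> L" by auto
    hence z': "z + \<omega> \<notin> L" using L_shift[OF omL] by auto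
    have "((\<lambda>z. wp w1 w2 (z + \<omega>)) has_field_derivative (-2 * Qf (z + \<omega>))) (at z)"
      using wp_deriv'[OF z'] DERIV_shift by blast
    hence "((\<lambda>z. wp w1 w2 (z + \<omega>) - wp w1 w2 z) has_field_derivative (-2 * Qf (z + \<omega>) - (-2 * Qf z))) (at z)"
      by (intro DERIV_diff wp_deriv'[OF z])
    thus "((\<lambda>z. wp w1 w2 (z + \<omega>) - wp w1 w2 z) has_field_derivative 0) (at z)"
      using Qf_periodic[OF omL] by simp
  qed
  obtain c where c: "\<And>z. z \<in> - L \<Longrightarrow> wp w1 w2 (z + \<omega>) - wp w1 w2 z = c"
    using DERIV_zero_connected_constant[OF L_connected_compl L_open_compl finite.emptyI cont der] by blast
  have h: "- \<omega> / 2 \<notin> L" using half_not_L om L_uminus_iff[of "\<omega>/2"] by auto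
  have "c = wp w1 w2 (- \<omega> / 2 + \<omega>) - wp w1 w2 (- \<omega> / 2)" using c[of "-\<omega>/2"] h by simp
  also have "- \<omega> / 2 + \<omega> = - (- \<omega> / 2)" by simp
  also have "wp w1 w2 (- (- \<omega> / 2)) = wp w1 w2 (- \<omega> / 2)" by (rule wp_even)
  finally have "c = 0" by simp
  thus "z \<notin> L \<Longrightarrow> wp w1 w2 (z + \<omega>) = wp w1 w2 z" using c[of z] by simp
qed

lemma L_shift_iff: "\<omega> \<in> L \<Longrightarrow> z + \<omega> \<in> L \<longleftrightarrow> z \<in> L" by (rule L_shift)

lemma wp_periodic: "\<omega> \<in> L \<Longrightarrow> z \<notin> L \<Longrightarrow> wp w1 w2 (z + \<omega>) = wp w1 w2 z"
  by (rule periodic_ext[of L]) (auto simp: L_shift intro: wp_periodic_gen)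

lemma deriv_wp_odd: "z \<notin> L \<Longrightarrow> deriv (wp w1 w2) (-z) = - deriv (wp w1 w2) z"
  using deriv_wp'[of z] deriv_wp'[of "-z"] Qf_odd[of z] L_uminus_iff[of z] by simp

lemma deriv_wp_periodic: "\<omega> \<in> L \<Longrightarrow> z \<notin> L \<Longrightarrow> deriv (wp w1 w2) (z + \<omega>) = deriv (wp w1 w2) z"
  using deriv_wp'[of z] deriv_wp'[of "z + \<omega>"] Qf_periodic[of \<omega> z] L_shift[of \<omega> z] by simp

lemma deriv_wp_half: "z \<notin> L \<Longrightarrow> 2 * z \<in> L \<Longrightarrow> deriv (wp w1 w2) z = 0"
proof -
  assume z: "z \<notin> L" and h: "2 * z \<in> L"
  have "-z \<in> L \<longleftrightarrow> False" using z L_uminus_iff by auto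
  have "deriv (wp w1 w2) z = deriv (wp w1 w2) (-z + 2*z)" by simp
  also have "\<dots> = deriv (wp w1 w2) (-z)" using deriv_wp_periodic[OF h, of "-z"] z L_uminus_iff by auto
  also have "\<dots> = - deriv (wp w1 w2) z" by (rule deriv_wp_odd[OF z])
  finally show ?thesis by simp
qed

lemma wzeta_quasi:
  assumes om: "\<omega> \<in> L"
  obtains \<eta> where "\<And>z. z \<notin> L \<Longrightarrow> wzeta w1 w2 (z + \<omega>) = wzeta w1 w2 z + \<eta>"
proof -
  have cont: "continuous_on (- L) (\<lambda>z. wzeta w1 w2 (z + \<omega>) - wzeta w1 w2 z)"
  proof -
    have "continuous_on (- L) (\<lambda>z. wzeta w1 w2 (z + \<omega>))"
    proof (rule continuous_on_compose2[of "- L" "wzeta w1 w2"])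
      show "continuous_on (- L) (wzeta w1 w2)" using wzeta_holo holomorphic_on_imp_continuous_on by blast
      show "(\<lambda>z. z + \<omega>) ` (- L) \<subseteq> - L" using L_shift[OF om] by auto
    qed (intro continuous_intros)
    moreover have "continuous_on (- L) (wzeta w1 w2)" using wzeta_holo holomorphic_on_imp_continuous_on by blast
    ultimately show ?thesis by (intro continuous_intros)
  qed
  have der: "\<forall>z\<in>- L - {}. ((\<lambda>z. wzeta w1 w2 (z + \<omega>) - wzeta w1 w2 z) has_field_derivative 0) (at z)"
  proof
    fix z assume "z \<in> - L - {}"
    hence z: "z \<notin> L" by auto
    hence z': "z + \<omega> \<notin> L" using L_shift[OF om] by auto
    have "((\<lambda>z. wzeta w1 w2 (z + \<omega>)) has_field_derivative (- wp w1 w2 (z + \<omega>))) (at z)"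
      using wzeta_deriv[OF z'] DERIV_shift by blast
    hence "((\<lambda>z. wzeta w1 w2 (z + \<omega>) - wzeta w1 w2 z) has_field_derivative (- wp w1 w2 (z + \<omega>) - (- wp w1 w2 z))) (at z)"
      by (intro DERIV_diff wzeta_deriv[OF z])
    thus "((\<lambda>z. wzeta w1 w2 (z + \<omega>) - wzeta w1 w2 z) has_field_derivative 0) (at z)"
      using wp_periodic[OF om z] by simp
  qed
  obtain c where c: "\<And>z. z \<in> - L \<Longrightarrow> wzeta w1 w2 (z + \<omega>) - wzeta w1 w2 z = c"
    using DERIV_zero_connected_constant[OF L_connected_compl L_open_compl finite.emptyI cont der] by blast
  show ?thesis by (rule that[of c]) (use c in \<open>auto simp: algebra_simps\<close>)
qed

end

context wlat
begin

lemma ev_notin: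
  assumes "finite (E \<inter> cball e 1)"
  shows "eventually (\<lambda>x. x \<notin> E) (at e)"
proof -
  obtain r where r: "r > 0" "\<forall>y\<in>E. y \<noteq> e \<longrightarrow> r \<le> dist e y"
    using locfin_avoid[OF assms] by blast
  show ?thesis unfolding eventually_at
    by (rule exI[of _ r]) (use r in \<open>auto simp: dist_commute\<close>)
qed

lemma lim_shift:
  assumes Efin: "\<And>z. finite (E \<inter> cball z 1)"
    and Eper: "\<And>z \<omega>. \<omega> \<in> L \<Longrightarrow> z + \<omega> \<in> E \<longleftrightarrow> z \<in> E"
    and per: "\<And>z. z \<notin> E \<Longrightarrow> f (z + \<omega>) = f z" and om: "\<omega> \<in> L"
    and lim: "(f \<longlongrightarrow> l) (at e)"
  shows "(f \<longlongrightarrow> l) (at (e + \<omega>))"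
proof -
  have "((\<lambda>x. f (x + - \<omega>)) \<longlongrightarrow> l) (at (e - - \<omega>))"
    by (rule LIM_offset[OF lim])
  hence a: "((\<lambda>x. f (x - \<omega>)) \<longlongrightarrow> l) (at (e + \<omega>))" by simp
  have ev: "eventually (\<lambda>x. f (x - \<omega>) = f x) (at (e + \<omega>))"
    using ev_notin[OF Efin[of "e + \<omega>"]]
  proof eventually_elim
    case (elim x)
    have "x - \<omega> \<notin> E" using Eper[OF om, of "x - \<omega>"] elim by simp
    from per[OF this] show ?case by simp
  qed
  show ?thesis by (rule tendsto_cong[OF ev, THEN iffD1, OF a])
qed

lemma coords:
  obtains a b where "z = of_real a * w1 + of_real b * w2"
proof -
  define a where "a = - Im (cnj w2 * z) / D"
  define b where "b = Im (cnj w1 * z) / D"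
  define u where "u = z - (of_real a * w1 + of_real b * w2)"
  have e1: "Im (cnj w1 * u) = 0" unfolding u_def
    using Im1[of a b] D_nz by (simp add: b_def right_diff_distrib)
  have e2: "Im (cnj w2 * u) = 0" unfolding u_def
    using Im2[of a b] D_nz by (simp add: a_def right_diff_distrib)
  have e1': "Re w1 * Im u - Im w1 * Re u = 0" using e1 by simp
  have e2': "Re w2 * Im u - Im w2 * Re u = 0" using e2 by simp
  have "Re u * D = 0" unfolding D_def using e1' e2' by simp algebra
  hence x: "Re u = 0" using D_nz by simp
  have "Im u * D = 0" unfolding D_def using e1' e2' by simp algebra
  hence y: "Im u = 0" using D_nz by simp
  have "u = 0" using x y by (simp add: complex_eq_iff)
  thus ?thesis using that[of a b] by (simp add: u_def)
qed

lemma periodic_bounded: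
  assumes cont: "continuous_on UNIV F"
    and per: "\<And>z \<omega>. \<omega> \<in> L \<Longrightarrow> F (z + \<omega>) = F z"
  shows "bounded (range F)"
proof -
  define Par where "Par = (\<lambda>p. of_real (fst p) * w1 + of_real (snd p) * w2) ` ({0..1::real} \<times> {0..1::real})"
  have "compact Par" unfolding Par_def
    by (intro compact_continuous_image compact_Times compact_Icc) (intro continuous_intros)
  hence "compact (F ` Par)" using cont by (intro compact_continuous_image) (auto intro: continuous_on_subset)
  hence bd: "bounded (F ` Par)" by (rule compact_imp_bounded)
  have "range F \<subseteq> F ` Par"
  proof
    fix y assume "y \<in> range F"
    then obtain z where z: "y = F z" by auto
    obtain a b where ab: "z = of_real a * w1 + of_real b * w2" using coords by blast
    define p where "p = (a - of_int \<lfloor>a\<rfloor>, b - of_int \<lfloor>b\<rfloor>)"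
    define \<omega> where "\<omega> = of_int \<lfloor>a\<rfloor> * w1 + of_int \<lfloor>b\<rfloor> * w2"
    have om: "\<omega> \<in> L" unfolding \<omega>_def lattice_def by blast
    have p: "p \<in> {0..1} \<times> {0..1}" unfolding p_def by (auto simp: floor_le_iff) linarith+
    have "z = (of_real (fst p) * w1 + of_real (snd p) * w2) + \<omega>"
      unfolding ab p_def \<omega>_def by (simp add: algebra_simps)
    hence "F z = F (of_real (fst p) * w1 + of_real (snd p) * w2)" using per[OF om] by simp
    thus "y \<in> F ` Par" using z p unfolding Par_def by blast
  qed
  thus ?thesis using bd bounded_subset by blast
qed

lemma elliptic_const:
  assumes Efin: "\<And>z. finite (E \<inter> cball z 1)"
    and Eper: "\<And>z \<omega>. \<omega> \<in> L \<Longrightarrow> z + \<omega> \<in> E \<longleftrightarrow> z \<in> E"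
    and hol: "f holomorphic_on (- E)"
    and per1: "\<And>z. z \<notin> E \<Longrightarrow> f (z + w1) = f z"
    and per2: "\<And>z. z \<notin> E \<Longrightarrow> f (z + w2) = f z"
    and lim: "\<And>e. e \<in> E \<Longrightarrow> \<exists>l. (f \<longlongrightarrow> l) (at e)"
  obtains c where "\<And>z. z \<notin> E \<Longrightarrow> f z = c"
proof -
  have openE: "open (- E)" by (rule locfin_open[OF Efin])
  define F where "F z = (if z \<in> E then Lim (at z) f else f z)" for z
  have FL: "(f \<longlongrightarrow> F e) (at e)" if eE: "e \<in> E" for e
  proof -
    obtain l where l: "(f \<longlongrightarrow> l) (at e)" using lim[OF eE] by blast
    have "Lim (at e) f = l" using l by (rule tendsto_Lim[rotated]) simp
    thus ?thesis using l eE by (simp add: F_def)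
  qed
  have Ff: "F z = f z" if "z \<notin> E" for z using that by (simp add: F_def)
  have diff: "F field_differentiable (at z)" for z
  proof -
    obtain r where r: "r > 0" "\<forall>y\<in>E. y \<noteq> z \<longrightarrow> r \<le> dist z y"
      using locfin_avoid[OF Efin] by blast
    define B where "B = ball z r"
    have B1: "B - {z} \<subseteq> - E" using r by (auto simp: B_def)
    have holB: "F holomorphic_on (B - {z})"
      by (rule holomorphic_transform[OF holomorphic_on_subset[OF hol B1]]) (use B1 Ff in auto)
    have limz: "(F \<longlongrightarrow> F z) (at z)"
    proof -
      have evF: "eventually (\<lambda>x. f x = F x) (at z)"
        using ev_notin[OF Efin[of z]] by eventually_elim (simp add: Ff)
      have "(f \<longlongrightarrow> F z) (at z)"
      proof (cases "z \<in> E")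
        case True thus ?thesis by (rule FL)
      next
        case False
        hence "isCont f z" using hol openE
          by (meson ComplI holomorphic_on_imp_continuous_on continuous_on_eq_continuous_at)
        thus ?thesis using False Ff by (simp add: isCont_def)
      qed
      thus ?thesis by (rule tendsto_cong[OF evF, THEN iffD1])
    qed
    have "F holomorphic_on B"
    proof (rule no_isolated_singularity'[of "{z}"])
      show "(F \<longlongrightarrow> F x) (at x within B)" if "x \<in> {z}" for x
        using limz that by (auto intro: tendsto_within_subset)
    qed (use holB in \<open>auto simp: B_def\<close>)
    thus ?thesis using r by (intro holomorphic_on_imp_differentiable_at[of F B]) (auto simp: B_def)
  qed
  have holF: "F holomorphic_on UNIV"
    using diff by (simp add: holomorphic_on_def field_differentiable_at_within)
  have contF: "continuous_on UNIV F" using holF holomorphic_on_imp_continuous_on by blast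
  have perF: "F (z + \<omega>) = F z" if om: "\<omega> \<in> {w1, w2}" for z \<omega>
  proof -
    have omL: "\<omega> \<in> L" using om L_w1 L_w2 by auto
    have per: "\<And>z. z \<notin> E \<Longrightarrow> f (z + \<omega>) = f z" using per1 per2 om by auto
    show ?thesis
    proof (cases "z \<in> E")
      case False
      thus ?thesis using Eper[OF omL, of z] per Ff by simp
    next
      case True
      have zE: "z + \<omega> \<in> E" using True Eper[OF omL] by simp
      have "(f \<longlongrightarrow> F z) (at (z + \<omega>))" by (rule lim_shift[OF Efin Eper per omL FL[OF True]])
      moreover have "(f \<longlongrightarrow> F (z + \<omega>)) (at (z + \<omega>))" by (rule FL[OF zE])
      ultimately show ?thesis using tendsto_unique by (metis trivial_limit_at)
    qed
  qed
  have perF': "F (z + \<omega>) = F z" if "\<omega> \<in> L" for z \<omega>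
    using periodic_ext[of "{}" F, OF _ _ _ that] perF by auto
  have "bounded (range F)" by (rule periodic_bounded[OF contF perF'])
  from Liouville_theorem[OF holF this] obtain c where "\<And>z. F z = c"
    by (auto simp: constant_on_def)
  thus ?thesis using that Ff by metis
qed

end

lemma Bfun_add2: "Bfun f F \<Longrightarrow> Bfun g F \<Longrightarrow> Bfun (\<lambda>x. f x + g x) F"
  for f g :: "'a \<Rightarrow> complex"
proof -
  assume "Bfun f F" "Bfun g F"
  then obtain A B where A: "A > 0" "eventually (\<lambda>x. norm (f x) \<le> A) F"
    and B: "B > 0" "eventually (\<lambda>x. norm (g x) \<le> B) F" by (auto elim!: BfunE)
  have "eventually (\<lambda>x. norm (f x + g x) \<le> A + B) F"
    using A(2) B(2) by eventually_elim (rule order_trans[OF norm_triangle_ineq], simp add: add_mono)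
  thus ?thesis using A B by (intro BfunI) auto
qed

lemma Bfun_mult2: "Bfun f F \<Longrightarrow> Bfun g F \<Longrightarrow> Bfun (\<lambda>x. f x * g x) F"
  for f g :: "'a \<Rightarrow> complex"
proof -
  assume "Bfun f F" "Bfun g F"
  then obtain A B where A: "A > 0" "eventually (\<lambda>x. norm (f x) \<le> A) F"
    and B: "B > 0" "eventually (\<lambda>x. norm (g x) \<le> B) F" by (auto elim!: BfunE)
  have "eventually (\<lambda>x. norm (f x * g x) \<le> A * B) F"
    using A(2) B(2) by eventually_elim (auto simp: norm_mult intro!: mult_mono A(1)[THEN less_imp_le])
  thus ?thesis using A B by (intro BfunI) auto
qed

lemma Bfun_uminus2: "Bfun f F \<Longrightarrow> Bfun (\<lambda>x. - f x) F"
  for f :: "'a \<Rightarrow> complex"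
  using Bfun_mult2[of "\<lambda>_. -1" F f] by simp

lemma Bfun_diff2: "Bfun f F \<Longrightarrow> Bfun g F \<Longrightarrow> Bfun (\<lambda>x. f x - g x) F"
  for f g :: "'a \<Rightarrow> complex"
  using Bfun_add2[of f F "\<lambda>x. - g x"] Bfun_uminus2[of g F] by simp

lemma Bfun_power2: "Bfun f F \<Longrightarrow> Bfun (\<lambda>x. f x ^ n) F"
  for f :: "'a \<Rightarrow> complex"
  by (induction n) (auto intro: Bfun_mult2)

lemma Bfun_id0: "Bfun (\<lambda>z::complex. z) (at 0)"
proof (rule BfunI)
  show "eventually (\<lambda>z::complex. norm z \<le> 1) (at 0)"
    unfolding eventually_at by (rule exI[of _ 1]) (auto simp: dist_norm)
qed

lemmas Bfun_intros = Bfun_add2 Bfun_diff2 Bfun_mult2 Bfun_uminus2 Bfun_power2 Bfun_const Bfun_id0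

lemma ode_alg:
  fixes z a b p q :: complex
  assumes "z \<noteq> 0"
  shows "(-2/z^3 + 2*a*z + 4*b*z^3 + q*z^4)^2 - (4*(1/z^2 + a*z^2 + b*z^4 + p*z^5)^3 - 20*a*(1/z^2 + a*z^2 + b*z^4 + p*z^5) - 28*b)
   = z * (- 4*q - 12*p + 12*a^2*z + 12*a*b*z^3 + 4*a*q*z^4 - 4*a*p*z^4 + 4*b^2*z^5 - 4*a^3*z^5 + 8*b*q*z^6 - 24*b*p*z^6 + q^2*z^7 - 12*p^2*z^7 - 12*a^2*b*z^7 - 12*a^2*p*z^8 - 12*a*b^2*z^9 - 24*a*b*p*z^10 - 4*b^3*z^11 - 12*a*p^2*z^11 - 12*b^2*p*z^12 - 12*b*p^2*z^13 - 4*p^3*z^14)"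
proof -
  define y where "y = 1 / z"
  have zy: "z * y = 1" using assms by (simp add: y_def)
  have e1: "-2/z^3 = -2 * y^3" "1/z^2 = y^2" by (simp_all add: y_def power_one_over)
  show ?thesis unfolding e1 using zy by algebra
qed

lemma E2_alg:
  fixes z w :: complex
  assumes "w \<noteq> 0" "z \<noteq> w"
  shows "1/(z-w)^2 - 1/w^2 - (2*z/w^3 + 3*z^2/w^4 + 4*z^3/w^5 + 5*z^4/w^6) = z^5*(6*w - 5*z)/(w^6*(z-w)^2)"
proof -
  have d: "z - w \<noteq> 0" using assms by simp
  show ?thesis using assms(1) d by (simp add: field_simps) (simp add: algebra_simps power2_eq_square power3_eq_cube power4_eq_xxxx power_numeral_reduce)
qed

lemma E3_alg:
  fixes z w :: complex
  assumes "w \<noteq> 0" "z \<noteq> w"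
  shows "1/(z-w)^3 + (1/w^3 + 3*z/w^4 + 6*z^2/w^5 + 10*z^3/w^6) = z^4*(15*w^2 - 24*w*z + 10*z^2)/(w^6*(z-w)^3)"
proof -
  have d: "z - w \<noteq> 0" using assms by simp
  show ?thesis using assms(1) d by (simp add: field_simps) (simp add: algebra_simps power2_eq_square power3_eq_cube power4_eq_xxxx power_numeral_reduce)
qed

lemma half_dist:
  fixes z w :: complex
  assumes "2 * cmod z \<le> cmod w"
  shows "cmod w / 2 \<le> cmod (z - w)"
  using norm_triangle_ineq2[of w z] assms by (simp add: norm_minus_commute)

lemma E2_bound:
  fixes z w :: complex
  assumes w: "w \<noteq> 0" and zw: "2 * cmod z \<le> cmod w"
  shows "cmod (z^5*(6*w - 5*z)/(w^6*(z-w)^2)) \<le> 34 * cmod z ^ 5 * (1 / cmod w ^ 7)"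
proof -
  have wp: "cmod w > 0" using w by simp
  have d: "cmod w / 2 \<le> cmod (z - w)" by (rule half_dist[OF zw])
  have "cmod (6*w - 5*z) \<le> 6 * cmod w + 5 * cmod z"
    using norm_triangle_ineq4[of "6*w" "5*z"] by (simp add: norm_mult)
  also have "\<dots> \<le> 17/2 * cmod w" using zw by simp
  finally have n: "cmod (6*w - 5*z) \<le> 17/2 * cmod w" .
  have "cmod (z^5*(6*w - 5*z)/(w^6*(z-w)^2)) = cmod z ^ 5 * cmod (6*w - 5*z) / (cmod w ^ 6 * cmod (z-w)^2)"
    by (simp add: norm_mult norm_divide norm_power)
  also have "\<dots> \<le> cmod z ^ 5 * (17/2 * cmod w) / (cmod w ^ 6 * (cmod w / 2)^2)"
    using wp d n by (intro frac_le mult_left_mono mult_pos_pos power_mono) auto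
  also have "\<dots> = 34 * cmod z ^ 5 * (1 / cmod w ^ 7)"
    using wp by (simp add: field_simps eval_nat_numeral)
  finally show ?thesis .
qed

lemma E3_bound:
  fixes z w :: complex
  assumes w: "w \<noteq> 0" and zw: "2 * cmod z \<le> cmod w"
  shows "cmod (z^4*(15*w^2 - 24*w*z + 10*z^2)/(w^6*(z-w)^3)) \<le> 240 * cmod z ^ 4 * (1 / cmod w ^ 7)"
proof -
  have wp: "cmod w > 0" using w by simp
  have d: "cmod w / 2 \<le> cmod (z - w)" by (rule half_dist[OF zw])
  have z0: "cmod z \<ge> 0" by simp
  have "cmod (15*w^2 - 24*w*z + 10*z^2) \<le> cmod (15*w^2) + cmod (24*w*z) + cmod (10*z^2)"
    by (rule order_trans[OF norm_triangle_ineq] order_trans[OF norm_triangle_ineq4] add_mono order_refl)+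
  also have "\<dots> = 15 * cmod w ^ 2 + 24 * cmod w * cmod z + 10 * cmod z ^ 2"
    by (simp add: norm_mult norm_power)
  also have "\<dots> \<le> 15 * cmod w ^ 2 + 24 * cmod w * (cmod w / 2) + 10 * (cmod w / 2) ^ 2"
    using zw z0 by (intro add_mono mult_left_mono power_mono order_refl) auto
  also have "\<dots> = 59/2 * cmod w ^ 2" by (simp add: power2_eq_square field_simps)
  finally have n: "cmod (15*w^2 - 24*w*z + 10*z^2) \<le> 59/2 * cmod w ^ 2" .
  have "cmod (z^4*(15*w^2 - 24*w*z + 10*z^2)/(w^6*(z-w)^3)) = cmod z ^ 4 * cmod (15*w^2 - 24*w*z + 10*z^2) / (cmod w ^ 6 * cmod (z-w)^3)"
    by (simp add: norm_mult norm_divide norm_power)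
  also have "\<dots> \<le> cmod z ^ 4 * (59/2 * cmod w ^ 2) / (cmod w ^ 6 * (cmod w / 2)^3)"
    using wp d n by (intro frac_le mult_left_mono mult_pos_pos power_mono) auto
  also have "\<dots> = 236 * cmod z ^ 4 * (1 / cmod w ^ 7)"
    using wp by (simp add: field_simps eval_nat_numeral)
  also have "\<dots> \<le> 240 * cmod z ^ 4 * (1 / cmod w ^ 7)"
    using wp by (intro mult_right_mono) auto
  finally show ?thesis .
qed

context wlat
begin

definition "G4 = (\<Sum>\<^sub>\<infinity>w\<in>L0. 1 / w^4)"
definition "G6 = (\<Sum>\<^sub>\<infinity>w\<in>L0. 1 / w^6)"
definition "S7 = (\<Sum>\<^sub>\<infinity>w\<in>L0. 1 / cmod w^7)"

lemma g2_eq: "g2 w1 w2 = 20 * (3 * G4)" by (simp add: g2_def G4_def)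
lemma g3_eq: "g3 w1 w2 = 28 * (5 * G6)" by (simp add: g3_def G6_def)

lemma pow_summable: "n \<ge> 3 \<Longrightarrow> (\<lambda>w. 1 / w^n) summable_on L0"
  by (rule Infinite_Sum.abs_summable_summable, rule Infinite_Sum.abs_summable_on_comparison_test'[OF L_summable])
     (auto simp: norm_divide norm_power)

lemma odd_sum_zero:
  assumes "odd n"
  shows "(\<Sum>\<^sub>\<infinity>w\<in>L0. 1 / w^n) = 0"
proof -
  have "(\<Sum>\<^sub>\<infinity>w\<in>L0. 1 / w^n) = (\<Sum>\<^sub>\<infinity>w\<in>L0. 1 / (-w)^n)"
    by (rule infsum_reindex_bij_betw[OF bij_uminus_L0, symmetric])
  also have "\<dots> = (\<Sum>\<^sub>\<infinity>w\<in>L0. - (1 / w^n))"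
    using assms by (intro infsum_cong) (simp add: power_minus_odd)
  also have "\<dots> = - (\<Sum>\<^sub>\<infinity>w\<in>L0. 1 / w^n)" by (rule infsum_uminus)
  finally show ?thesis by simp
qed

lemma S7_summable: "(\<lambda>w. 1 / cmod w^7) summable_on L0" by (rule L_summable) simp

lemma small_notin:
  assumes "z \<noteq> 0" "cmod z \<le> cc / 2"
  shows "z \<notin> L" "\<And>w. w \<in> L0 \<Longrightarrow> 2 * cmod z \<le> cmod w" "\<And>w. w \<in> L0 \<Longrightarrow> z \<noteq> w"
proof -
  show w: "\<And>w. w \<in> L0 \<Longrightarrow> 2 * cmod z \<le> cmod w" using L_sep assms by force
  show "z \<notin> L"
  proof
    assume "z \<in> L"
    hence "2 * cmod z \<le> cmod z" using w assms by auto
    thus False using assms by simp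
  qed
  show "\<And>w. w \<in> L0 \<Longrightarrow> z \<noteq> w" using w assms by force
qed

lemma infsum_bound_helper:
  assumes f: "f summable_on L0" and bd: "\<And>w. w \<in> L0 \<Longrightarrow> cmod (f w) \<le> C * (1 / cmod w ^ 7)"
    and C: "C \<ge> 0"
  shows "cmod (infsum f L0) \<le> C * S7"
proof -
  have Ms: "(\<lambda>w. C * (1 / cmod w ^ 7)) summable_on L0"
    by (rule summable_on_cmult_right[OF S7_summable])
  have ns: "(\<lambda>w. norm (f w)) summable_on L0"
    by (rule Infinite_Sum.abs_summable_on_comparison_test'[OF Ms]) (use bd in auto)
  have "cmod (infsum f L0) \<le> infsum (\<lambda>w. norm (f w)) L0" by (rule norm_infsum_bound[OF ns])
  also have "\<dots> \<le> infsum (\<lambda>w. C * (1 / cmod w ^ 7)) L0" by (rule infsum_mono[OF ns Ms bd])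
  also have "\<dots> = C * S7" unfolding S7_def by (rule infsum_cmult_right[OF S7_summable])
  finally show ?thesis .
qed

lemma P_expansion:
  assumes z: "z \<noteq> 0" "cmod z \<le> cc / 2"
  shows "cmod (P z - 3 * G4 * z^2 - 5 * G6 * z^4) \<le> 34 * cmod z ^ 5 * S7"
proof -
  note sm = small_notin[OF z]
  have zL0: "z \<notin> L0" using sm by auto
  define T where "T w = (-2*z) * (1/w^3) + (-3*z^2) * (1/w^4) + (-4*z^3) * (1/w^5) + (-5*z^4) * (1/w^6)" for w
  have s3: "(\<lambda>w. 1/w^3) summable_on L0" and s4: "(\<lambda>w. 1/w^4) summable_on L0"
    and s5: "(\<lambda>w. 1/w^5) summable_on L0" and s6: "(\<lambda>w. 1/w^6) summable_on L0"
    by (rule pow_summable; simp)+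
  have Ts: "T summable_on L0" unfolding T_def
    by (intro summable_on_add summable_on_cmult_right s3 s4 s5 s6)
  have Tsum: "infsum T L0 = - (3 * G4 * z^2 + 5 * G6 * z^4)"
  proof -
    have "infsum T L0 = (-2*z) * (\<Sum>\<^sub>\<infinity>w\<in>L0. 1/w^3) + (-3*z^2) * G4 + (-4*z^3) * (\<Sum>\<^sub>\<infinity>w\<in>L0. 1/w^5) + (-5*z^4) * G6"
      unfolding T_def G4_def G6_def
      by (subst infsum_add, (intro summable_on_add summable_on_cmult_right s3 s4 s5 s6)+)+
         (simp only: infsum_cmult_right[OF s3] infsum_cmult_right[OF s4] infsum_cmult_right[OF s5] infsum_cmult_right[OF s6])
    also have "\<dots> = - (3 * G4 * z^2 + 5 * G6 * z^4)"
      using odd_sum_zero[of 3] odd_sum_zero[of 5] by simp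
    finally show ?thesis .
  qed
  have Es: "(\<lambda>w. pt w z + T w) summable_on L0"
    by (intro summable_on_add summable_at(1)[OF zL0] Ts)
  have "infsum (\<lambda>w. pt w z + T w) L0 = P z + infsum T L0"
    unfolding P_def by (rule infsum_add[OF summable_at(1)[OF zL0] Ts])
  hence eq: "P z - 3 * G4 * z^2 - 5 * G6 * z^4 = infsum (\<lambda>w. pt w z + T w) L0"
    using Tsum by simp
  have "cmod (infsum (\<lambda>w. pt w z + T w) L0) \<le> (34 * cmod z ^ 5) * S7"
  proof (rule infsum_bound_helper[OF Es])
    fix w assume w: "w \<in> L0"
    have wz: "w \<noteq> 0" "z \<noteq> w" using w sm by auto
    have "pt w z + T w = 1/(z-w)^2 - 1/w^2 - (2*z/w^3 + 3*z^2/w^4 + 4*z^3/w^5 + 5*z^4/w^6)"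
      by (simp add: pt_def T_def algebra_simps)
    also have "\<dots> = z^5*(6*w - 5*z)/(w^6*(z-w)^2)" by (rule E2_alg[OF wz])
    finally have "pt w z + T w = z^5*(6*w - 5*z)/(w^6*(z-w)^2)" .
    thus "cmod (pt w z + T w) \<le> (34 * cmod z ^ 5) * (1 / cmod w ^ 7)"
      using E2_bound[OF wz(1) sm(2)[OF w]] by simp
  qed simp
  thus ?thesis using eq by simp
qed

lemma Q_expansion:
  assumes z: "z \<noteq> 0" "cmod z \<le> cc / 2"
  shows "cmod (Q z + 3 * G4 * z + 10 * G6 * z^3) \<le> 240 * cmod z ^ 4 * S7"
proof -
  note sm = small_notin[OF z]
  have zL0: "z \<notin> L0" using sm by auto
  define T where "T w = (1/w^3) + (3*z) * (1/w^4) + (6*z^2) * (1/w^5) + (10*z^3) * (1/w^6)" for w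
  have s3: "(\<lambda>w. 1/w^3) summable_on L0" and s4: "(\<lambda>w. 1/w^4) summable_on L0"
    and s5: "(\<lambda>w. 1/w^5) summable_on L0" and s6: "(\<lambda>w. 1/w^6) summable_on L0"
    by (rule pow_summable; simp)+
  have Ts: "T summable_on L0" unfolding T_def
    by (intro summable_on_add summable_on_cmult_right s3 s4 s5 s6)
  have Tsum: "infsum T L0 = 3 * G4 * z + 10 * G6 * z^3"
  proof -
    have "infsum T L0 = (\<Sum>\<^sub>\<infinity>w\<in>L0. 1/w^3) + (3*z) * G4 + (6*z^2) * (\<Sum>\<^sub>\<infinity>w\<in>L0. 1/w^5) + (10*z^3) * G6"
      unfolding T_def G4_def G6_def
      by (subst infsum_add, (intro summable_on_add summable_on_cmult_right s3 s4 s5 s6)+)+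
         (simp only: infsum_cmult_right[OF s3] infsum_cmult_right[OF s4] infsum_cmult_right[OF s5] infsum_cmult_right[OF s6])
    also have "\<dots> = 3 * G4 * z + 10 * G6 * z^3"
      using odd_sum_zero[of 3] odd_sum_zero[of 5] by simp
    finally show ?thesis .
  qed
  have Es: "(\<lambda>w. qt w z + T w) summable_on L0"
    by (intro summable_on_add summable_at(3)[OF zL0] Ts)
  have "infsum (\<lambda>w. qt w z + T w) L0 = Q z + infsum T L0"
    unfolding Q_def by (rule infsum_add[OF summable_at(3)[OF zL0] Ts])
  hence eq: "Q z + 3 * G4 * z + 10 * G6 * z^3 = infsum (\<lambda>w. qt w z + T w) L0"
    using Tsum by simp
  have "cmod (infsum (\<lambda>w. qt w z + T w) L0) \<le> (240 * cmod z ^ 4) * S7"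
  proof (rule infsum_bound_helper[OF Es])
    fix w assume w: "w \<in> L0"
    have wz: "w \<noteq> 0" "z \<noteq> w" using w sm by auto
    have "qt w z + T w = z^4*(15*w^2 - 24*w*z + 10*z^2)/(w^6*(z-w)^3)"
      using E3_alg[OF wz] by (simp add: qt_def T_def)
    thus "cmod (qt w z + T w) \<le> (240 * cmod z ^ 4) * (1 / cmod w ^ 7)"
      using E3_bound[OF wz(1) sm(2)[OF w]] by simp
  qed simp
  thus ?thesis using eq by simp
qed

end

context wlat
begin

definition "fode z = deriv (wp w1 w2) z ^ 2 - rpoly w1 w2 (wp w1 w2 z)"

lemma fode_lim0: "(fode \<longlongrightarrow> 0) (at 0)"
proof -
  define a where "a = 3 * G4"
  define b where "b = 5 * G6"
  define pf where "pf z = (P z - 3*G4*z^2 - 5*G6*z^4) / z^5" for z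
  define qf where "qf z = (-2) * ((Q z + 3*G4*z + 10*G6*z^3) / z^4)" for z
  define Qp where "Qp z = (- 4*qf z - 12*pf z + 12*a^2*z + 12*a*b*z^3 + 4*a*qf z*z^4 - 4*a*pf z*z^4 + 4*b^2*z^5 - 4*a^3*z^5 + 8*b*qf z*z^6 - 24*b*pf z*z^6 + qf z^2*z^7 - 12*pf z^2*z^7 - 12*a^2*b*z^7 - 12*a^2*pf z*z^8 - 12*a*b^2*z^9 - 24*a*b*pf z*z^10 - 4*b^3*z^11 - 12*a*pf z^2*z^11 - 12*b^2*pf z*z^12 - 12*b*pf z^2*z^13 - 4*pf z^3*z^14)" for z
  have ev: "eventually (\<lambda>z. z \<noteq> 0 \<and> cmod z \<le> cc/2) (at (0::complex))"
    unfolding eventually_at by (rule exI[of _ "cc/2"]) (auto simp: dist_norm cc_pos)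
  have Bp: "Bfun pf (at 0)"
  proof (rule BfunI)
    show "eventually (\<lambda>z. norm (pf z) \<le> 34 * S7) (at 0)"
      using ev
    proof eventually_elim
      case (elim z)
      hence zp: "cmod z > 0" by simp
      have "norm (pf z) = cmod (P z - 3*G4*z^2 - 5*G6*z^4) / cmod z ^ 5"
        by (simp add: pf_def norm_divide norm_power)
      also have "\<dots> \<le> (34 * cmod z ^ 5 * S7) / cmod z ^ 5"
        using P_expansion[of z] elim zp by (intro divide_right_mono) auto
      also have "\<dots> = 34 * S7" using zp by simp
      finally show ?case .
    qed
  qed
  have Bq: "Bfun qf (at 0)"
  proof (rule BfunI)
    show "eventually (\<lambda>z. norm (qf z) \<le> 480 * S7) (at 0)"
      using ev
    proof eventually_elim
      case (elim z)
      hence zp: "cmod z > 0" by simp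
      have "norm (qf z) = 2 * (cmod (Q z + 3*G4*z + 10*G6*z^3) / cmod z ^ 4)"
        unfolding qf_def norm_mult norm_divide norm_power by simp
      also have "\<dots> \<le> 2 * ((240 * cmod z ^ 4 * S7) / cmod z ^ 4)"
        using Q_expansion[of z] elim zp by (intro divide_right_mono mult_left_mono) auto
      also have "\<dots> = 480 * S7" using zp by simp
      finally show ?case .
    qed
  qed
  have BQ: "Bfun Qp (at 0)" unfolding Qp_def by (intro Bfun_intros Bp Bq)
  have Zid: "Zfun (\<lambda>z::complex. z) (at 0)"
    using tendsto_Zfun_iff[of "\<lambda>z::complex. z" 0 "at 0"] tendsto_ident_at by simp
  have "Zfun (\<lambda>z. z * Qp z) (at 0)"
    by (rule bounded_bilinear.Zfun_prod_Bfun[OF bounded_bilinear_mult Zid BQ])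
  hence lim1: "((\<lambda>z. z * Qp z) \<longlongrightarrow> 0) (at 0)" by (simp add: tendsto_Zfun_iff)
  have ev2: "eventually (\<lambda>z. z * Qp z = fode z) (at 0)"
    using ev
  proof eventually_elim
    case (elim z)
    hence z0: "z \<noteq> 0" by simp
    have zL: "z \<notin> L" using small_notin(1)[of z] elim by simp
    have w: "wp w1 w2 z = 1/z^2 + a*z^2 + b*z^4 + pf z*z^5"
      using z0 by (simp add: wp_eq pf_def a_def b_def)
    have qz: "qf z*z^4 = -2 * (Q z + 3*G4*z + 10*G6*z^3)" using z0 by (simp add: qf_def)
    have d: "deriv (wp w1 w2) z = -2/z^3 + 2*a*z + 4*b*z^3 + qf z*z^4"
      unfolding qz deriv_wp[OF zL] by (simp add: a_def b_def algebra_simps)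
    have r: "rpoly w1 w2 u = 4*u^3 - 20*a*u - 28*b" for u
      by (simp add: rpoly_def g2_eq g3_eq a_def b_def)
    show ?case unfolding fode_def w d r Qp_def by (rule ode_alg[OF z0, symmetric])
  qed
  show ?thesis by (rule tendsto_cong[OF ev2, THEN iffD1, OF lim1])
qed

lemma deriv_wp_holo: "deriv (wp w1 w2) holomorphic_on (- L)"
  by (rule holomorphic_deriv[OF wp_holo L_open_compl])

lemma fode_holo: "fode holomorphic_on (- L)"
proof -
  have "(\<lambda>z. deriv (wp w1 w2) z ^ 2 - (4 * wp w1 w2 z ^ 3 - g2 w1 w2 * wp w1 w2 z - g3 w1 w2)) holomorphic_on (- L)"
    using deriv_wp_holo wp_holo L_open_compl by (intro holomorphic_intros)
  thus ?thesis by (simp add: fode_def[abs_def] rpoly_def)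
qed

lemma fode_per: "\<omega> \<in> L \<Longrightarrow> z \<notin> L \<Longrightarrow> fode (z + \<omega>) = fode z"
  by (simp add: fode_def deriv_wp_periodic wp_periodic)

theorem wp_ode: "z \<notin> L \<Longrightarrow> deriv (wp w1 w2) z ^ 2 = rpoly w1 w2 (wp w1 w2 z)"
proof -
  assume z: "z \<notin> L"
  have lim: "\<exists>l. (fode \<longlongrightarrow> l) (at e)" if e: "e \<in> L" for e
  proof -
    have "(fode \<longlongrightarrow> 0) (at (0 + e))"
      by (rule lim_shift[OF L_finite L_shift fode_per[OF e] e fode_lim0]) auto
    thus ?thesis by auto
  qed
  obtain c where c: "\<And>z. z \<notin> L \<Longrightarrow> fode z = c"
    by (rule elliptic_const[OF L_finite L_shift fode_holo fode_per fode_per lim])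
       (use L_w1 L_w2 in auto)
  have "eventually (\<lambda>x. c = fode x) (at 0)"
    using ev_notin[OF L_finite[of 0 1]] by eventually_elim (simp add: c)
  from tendsto_cong[OF this, THEN iffD2, OF fode_lim0] have "((\<lambda>x::complex. c) \<longlongrightarrow> 0) (at 0)" .
  hence "c = 0" using tendsto_const tendsto_unique by (metis trivial_limit_at)
  thus ?thesis using c[OF z] by (simp add: fode_def)
qed

theorem wp_second_deriv:
  assumes z: "z \<notin> L" and nz: "deriv (wp w1 w2) z \<noteq> 0"
  shows "deriv (deriv (wp w1 w2)) z = rpoly' w1 w2 (wp w1 w2 z) / 2"
proof -
  let ?h = "deriv (wp w1 w2)"
  have zz: "z \<in> - L" using z by simp
  have dh: "(?h has_field_derivative deriv ?h z) (at z)"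
    by (rule holomorphic_derivI[OF deriv_wp_holo L_open_compl zz])
  have dw: "(wp w1 w2 has_field_derivative ?h z) (at z)"
    by (rule holomorphic_derivI[OF wp_holo L_open_compl zz])
  have d1: "((\<lambda>x. ?h x ^ 2) has_field_derivative (2 * ?h z * deriv ?h z)) (at z)"
    using dh by (auto intro!: derivative_eq_intros)
  have d1': "((\<lambda>x. rpoly w1 w2 (wp w1 w2 x)) has_field_derivative (2 * ?h z * deriv ?h z)) (at z)"
    by (rule has_field_derivative_transform_within_open[OF d1 L_open_compl zz]) (simp add: wp_ode)
  have d2: "((\<lambda>x. rpoly w1 w2 (wp w1 w2 x)) has_field_derivative (rpoly' w1 w2 (wp w1 w2 z) * ?h z)) (at z)"
    unfolding rpoly_def rpoly'_def using dw
    by (auto intro!: derivative_eq_intros simp: algebra_simps power2_eq_square power3_eq_cube)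
  have "2 * ?h z * deriv ?h z = rpoly' w1 w2 (wp w1 w2 z) * ?h z"
    using DERIV_unique[OF d1' d2] .
  thus ?thesis using nz by (simp add: field_simps)
qed

end

lemma taylor2:
  assumes hol: "f holomorphic_on S" and S: "open S" and a: "a \<in> S"
  shows "((\<lambda>x. (f x - f a - deriv f a * (x - a)) / (x - a)^2) \<longlongrightarrow> deriv (deriv f) a / 2) (at a)"
proof -
  define g where "g z = (if z = a then deriv f a else (f z - f a) / (z - a))" for z
  have holg: "g holomorphic_on S"
    unfolding g_def[abs_def] by (rule pole_lemma[OF hol]) (simp add: interior_open[OF S] a)
  have fg: "f z = f a + (z - a) * g z" for z by (cases "z = a") (simp_all add: g_def)
  have dg: "(g has_field_derivative deriv g a) (at a)" by (rule holomorphic_derivI[OF holg S a])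
  have q: "((\<lambda>x. (g x - g a) / (x - a)) \<longlongrightarrow> deriv g a) (at a)"
    using dg by (simp add: has_field_derivative_iff)
  have ev: "eventually (\<lambda>x. (g x - g a) / (x - a) = (f x - f a - deriv f a * (x - a)) / (x - a)^2) (at a)"
    unfolding eventually_at by (rule exI[of _ 1]) (auto simp: g_def field_simps power2_eq_square)
  have lim: "((\<lambda>x. (f x - f a - deriv f a * (x - a)) / (x - a)^2) \<longlongrightarrow> deriv g a) (at a)"
    by (rule tendsto_cong[OF ev, THEN iffD1, OF q])
  have df: "deriv f z = g z + (z - a) * deriv g z" if z: "z \<in> S" for z
  proof -
    have d1: "((\<lambda>x. f a + (x - a) * g x) has_field_derivative (0 + ((1 - 0) * g z + deriv g z * (z - a)))) (at z)"
      by (rule DERIV_add[OF DERIV_const DERIV_mult[OF DERIV_diff[OF DERIV_ident DERIV_const] holomorphic_derivI[OF holg S z]]])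
    have fe: "(\<lambda>x. f a + (x - a) * g x) = f" by (rule ext, rule fg[symmetric])
    from d1 have "(f has_field_derivative (0 + ((1 - 0) * g z + deriv g z * (z - a)))) (at z)"
      unfolding fe .
    thus ?thesis by (simp add: DERIV_imp_deriv algebra_simps)
  qed
  have holdg: "deriv g holomorphic_on S" by (rule holomorphic_deriv[OF holg S])
  have d2: "((\<lambda>x. g x + (x - a) * deriv g x) has_field_derivative (deriv g a + ((1 - 0) * deriv g a + deriv (deriv g) a * (a - a)))) (at a)"
    by (rule DERIV_add[OF holomorphic_derivI[OF holg S a] DERIV_mult[OF DERIV_diff[OF DERIV_ident DERIV_const] holomorphic_derivI[OF holdg S a]]])
  have "(deriv f has_field_derivative (deriv g a + ((1 - 0) * deriv g a + deriv (deriv g) a * (a - a)))) (at a)"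
    by (rule has_field_derivative_transform_within_open[OF d2 S a]) (simp add: df)
  hence "deriv (deriv f) a = 2 * deriv g a" by (simp add: DERIV_imp_deriv)
  thus ?thesis using lim by simp
qed

context wlat
begin

abbreviation "wpf \<equiv> wp w1 w2"
abbreviation "zf \<equiv> wzeta w1 w2"
abbreviation "dwp \<equiv> deriv (wp w1 w2)"

lemma isCont_wp: "x \<notin> L \<Longrightarrow> isCont wpf x"
  using wp_holo L_open_compl holomorphic_on_imp_continuous_on continuous_on_eq_continuous_at by blast
lemma isCont_zf: "x \<notin> L \<Longrightarrow> isCont zf x"
  using wzeta_holo L_open_compl holomorphic_on_imp_continuous_on continuous_on_eq_continuous_at by blast
lemma isCont_dwp: "x \<notin> L \<Longrightarrow> isCont dwp x"
  using deriv_wp_holo L_open_compl holomorphic_on_imp_continuous_on continuous_on_eq_continuous_at by blast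
lemma isCont_Zs: "x \<notin> L0 \<Longrightarrow> isCont Zs x"
  using Zs_holo L0_open_compl holomorphic_on_imp_continuous_on continuous_on_eq_continuous_at by blast
lemma isCont_P: "x \<notin> L0 \<Longrightarrow> isCont P x"
  using P_holo L0_open_compl holomorphic_on_imp_continuous_on continuous_on_eq_continuous_at by blast
lemma dP_holo: "deriv P holomorphic_on (- L0)"
  by (rule holomorphic_deriv[OF P_holo L0_open_compl])
lemma isCont_dP: "x \<notin> L0 \<Longrightarrow> isCont (deriv P) x"
  using dP_holo L0_open_compl holomorphic_on_imp_continuous_on continuous_on_eq_continuous_at by blast
lemma dP_eq: "x \<notin> L0 \<Longrightarrow> deriv P x = -2 * Q x"
  using P_deriv DERIV_imp_deriv by blast

lemma not_L0_0: "0 \<notin> L0" by simp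

lemma P_0: "P 0 = 0"
  unfolding P_def by (rule infsum_0) (simp add: pt_def)
lemma Zs_0: "Zs 0 = 0"
  unfolding Zs_def by (rule infsum_0) (simp add: zt_def)
lemma dZs_0: "deriv Zs 0 = 0"
  using Zs_deriv[OF not_L0_0] P_0 DERIV_imp_deriv by fastforce

lemma zf_shift_holo: "(\<lambda>z. zf (z + c)) holomorphic_on {z. z + c \<notin> L}"
proof -
  have "(zf \<circ> (\<lambda>z. z + c)) holomorphic_on {z. z + c \<notin> L}"
    by (rule holomorphic_on_compose_gen[OF _ wzeta_holo]) (auto intro: holomorphic_intros)
  thus ?thesis by (simp add: o_def)
qed

lemma zf_shift_holo': "(\<lambda>z. zf (z - c)) holomorphic_on {z. z - c \<notin> L}"
  using zf_shift_holo[of "-c"] by simp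

lemma open_shift: "open {z. z + c \<notin> L}" "open {z. z - c \<notin> L}"
proof -
  have "{z. z + c \<notin> L} = (\<lambda>z. z + c) -` (- L)" by auto
  thus "open {z. z + c \<notin> L}" using L_open_compl by (simp add: continuous_open_vimage)
  have "{z. z - c \<notin> L} = (\<lambda>z. z - c) -` (- L)" by auto
  thus "open {z. z - c \<notin> L}" using L_open_compl by (simp add: continuous_open_vimage)
qed

definition "Hf y z = (wpf z - wpf y) * (zf (z + y) + zf (z - y) - 2 * zf z) - dwp z"

lemma H_lim0:
  assumes y: "y \<notin> L"
  shows "\<exists>l. (Hf y \<longlongrightarrow> l) (at 0)"
proof -
  have my: "- y \<notin> L" using y L_uminus_iff by simp
  define U where "U = {z. z + y \<notin> L} \<inter> {z. z - y \<notin> L}"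
  define s where "s z = zf (z + y) + zf (z - y)" for z
  define c where "c = wpf y"
  have U: "open U" "0 \<in> U" using open_shift[of y] y my by (auto simp: U_def)
  have sh: "s holomorphic_on U" unfolding s_def[abs_def] U_def
    by (intro holomorphic_intros holomorphic_on_subset[OF zf_shift_holo] holomorphic_on_subset[OF zf_shift_holo']) auto
  have s0: "s 0 = 0" by (simp add: s_def wzeta_odd)
  have ds: "(s has_field_derivative (- wpf (0 + y) + - wpf (0 - y))) (at 0)"
  proof -
    have a: "((\<lambda>z. zf (z + y)) has_field_derivative - wpf (0 + y)) (at 0)"
      using DERIV_shift[of zf "- wpf y" 0 y] wzeta_deriv[OF y] by simp
    have b: "((\<lambda>z. zf (z + - y)) has_field_derivative - wpf (0 + - y)) (at 0)"
      using DERIV_shift[of zf "- wpf (- y)" 0 "- y"] wzeta_deriv[OF my] by simp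
    show ?thesis unfolding s_def using DERIV_add[OF a b] by simp
  qed
  hence ds0: "deriv s 0 = - 2 * c" by (simp add: DERIV_imp_deriv wp_even c_def)
  have t1: "((\<lambda>x. (s x - s 0 - deriv s 0 * (x - 0)) / (x - 0)^2) \<longlongrightarrow> deriv (deriv s) 0 / 2) (at 0)"
    by (rule taylor2[OF sh U])
  have t2: "((\<lambda>x. (Zs x - Zs 0 - deriv Zs 0 * (x - 0)) / (x - 0)^2) \<longlongrightarrow> deriv (deriv Zs) 0 / 2) (at 0)"
    by (rule taylor2[OF Zs_holo L0_open_compl]) simp
  have t3: "((\<lambda>x. (P x - P 0) / (x - 0)) \<longlongrightarrow> -2 * Q 0) (at 0)"
    using P_deriv[OF not_L0_0] by (simp add: has_field_derivative_iff)
  have cP: "(P \<longlongrightarrow> P 0) (at 0)" using isCont_P[OF not_L0_0] by (simp add: isCont_def)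
  have cZ: "(Zs \<longlongrightarrow> Zs 0) (at 0)" using isCont_Zs[OF not_L0_0] by (simp add: isCont_def)
  have cdP: "(deriv P \<longlongrightarrow> deriv P 0) (at 0)" using isCont_dP[OF not_L0_0] by (simp add: isCont_def)
  have cs: "(s \<longlongrightarrow> s 0) (at 0)"
    using sh U holomorphic_on_imp_continuous_on continuous_on_eq_continuous_at isCont_def by blast
  define F where "F x = (s x - s 0 - deriv s 0 * (x - 0)) / (x - 0)^2
      - 2 * ((Zs x - Zs 0 - deriv Zs 0 * (x - 0)) / (x - 0)^2) - 2 * ((P x - P 0) / (x - 0))
      + (P x - c) * (s x - 2 * Zs x) - deriv P x" for x
  have limF: "(F \<longlongrightarrow> deriv (deriv s) 0 / 2 - 2 * (deriv (deriv Zs) 0 / 2) - 2 * (-2 * Q 0)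
      + (P 0 - c) * (s 0 - 2 * Zs 0) - deriv P 0) (at 0)"
    unfolding F_def[abs_def] by (intro tendsto_intros t1 t2 t3 cP cZ cdP cs)
  have ev: "eventually (\<lambda>x. F x = Hf y x) (at 0)"
    using ev_notin[OF L_finite[of 0 1]]
  proof eventually_elim
    case (elim x)
    hence x0: "x \<noteq> 0" using L_0 by auto
    have xL0: "x \<notin> L0" using elim by simp
    have h: "Hf y x = (wpf x - c) * (s x - 2 * zf x) - dwp x" by (simp add: Hf_def s_def c_def)
    have e1: "wpf x = 1/x^2 + P x" by (rule wp_eq)
    have e2: "zf x = 1/x + Zs x" by (rule wzeta_eq)
    have e3: "dwp x = -2 / x^3 - 2 * Q x" by (rule deriv_wp[OF elim])
    show ?case
      unfolding F_def h e1 e2 e3 s0 ds0 dZs_0 Zs_0 P_0 dP_eq[OF xL0]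
      using x0 by (simp add: field_simps power2_eq_square power3_eq_cube)
  qed
  show ?thesis using tendsto_cong[OF ev, THEN iffD1, OF limF] by blast
qed

lemma H_limy:
  assumes y: "y \<notin> L" "y + y \<notin> L"
  shows "\<exists>l. (Hf y \<longlongrightarrow> l) (at y)"
proof -
  define c where "c = wpf y"
  define D where "D x = (wpf x - wpf y) / (x - y)" for x
  have dD: "(D \<longlongrightarrow> dwp y) (at y)"
    using holomorphic_derivI[OF wp_holo L_open_compl, of y UNIV] y by (simp add: has_field_derivative_iff D_def[abs_def])
  have cZ: "((\<lambda>x. Zs (x - y)) \<longlongrightarrow> Zs (y - y)) (at y)"
    by (rule isCont_tendsto_compose[OF _ tendsto_diff[OF tendsto_ident_at tendsto_const]]) (simp add: isCont_Zs)
  have c1: "(wpf \<longlongrightarrow> wpf y) (at y)" using isCont_wp y by (simp add: isCont_def)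
  have c2: "((\<lambda>x. zf (x + y)) \<longlongrightarrow> zf (y + y)) (at y)"
    by (rule isCont_tendsto_compose[OF isCont_zf[OF y(2)] tendsto_add[OF tendsto_ident_at tendsto_const]])
  have c3: "(zf \<longlongrightarrow> zf y) (at y)" using isCont_zf y by (simp add: isCont_def)
  have c4: "(dwp \<longlongrightarrow> dwp y) (at y)" using isCont_dwp y by (simp add: isCont_def)
  define F where "F x = D x * (1 + (x - y) * Zs (x - y)) + (wpf x - c) * (zf (x + y) - 2 * zf x) - dwp x" for x
  have limF: "(F \<longlongrightarrow> dwp y * (1 + (y - y) * Zs (y - y)) + (wpf y - c) * (zf (y + y) - 2 * zf y) - dwp y) (at y)"
    unfolding F_def[abs_def] by (intro tendsto_intros dD cZ c1 c2 c3 c4)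
  have ev: "eventually (\<lambda>x. F x = Hf y x) (at y)"
    unfolding eventually_at
  proof (intro exI[of _ 1] conjI allI ballI impI)
    fix x assume "x \<noteq> y \<and> dist x y < 1"
    hence xy: "x - y \<noteq> 0" by simp
    show "F x = Hf y x"
      unfolding F_def Hf_def D_def c_def wzeta_eq[of "x - y"]
      using xy by (simp add: field_simps)
  qed simp
  show ?thesis using tendsto_cong[OF ev, THEN iffD1, OF limF] by blast
qed

lemma H_limmy:
  assumes y: "y \<notin> L" "y + y \<notin> L"
  shows "\<exists>l. (Hf y \<longlongrightarrow> l) (at (-y))"
proof -
  have my: "- y \<notin> L" using y L_uminus_iff by simp
  have my2: "- y - y \<notin> L" using y(2) L_uminus_iff[of "y + y"] by (simp add: algebra_simps)
  define c where "c = wpf y"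
  have cc': "wpf (- y) = c" by (simp add: c_def wp_even)
  define D where "D x = (wpf x - wpf (- y)) / (x - (- y))" for x
  have dD: "(D \<longlongrightarrow> dwp (- y)) (at (- y))"
    using holomorphic_derivI[OF wp_holo L_open_compl, of "- y" UNIV] my by (simp add: has_field_derivative_iff D_def[abs_def])
  have cZ: "((\<lambda>x. Zs (x + y)) \<longlongrightarrow> Zs (- y + y)) (at (- y))"
    by (rule isCont_tendsto_compose[OF _ tendsto_add[OF tendsto_ident_at tendsto_const]]) (simp add: isCont_Zs)
  have c1: "(wpf \<longlongrightarrow> wpf (- y)) (at (- y))" using isCont_wp my by (simp add: isCont_def)
  have c2: "((\<lambda>x. zf (x - y)) \<longlongrightarrow> zf (- y - y)) (at (- y))"
    by (rule isCont_tendsto_compose[OF isCont_zf[OF my2] tendsto_diff[OF tendsto_ident_at tendsto_const]])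
  have c3: "(zf \<longlongrightarrow> zf (- y)) (at (- y))" using isCont_zf my by (simp add: isCont_def)
  have c4: "(dwp \<longlongrightarrow> dwp (- y)) (at (- y))" using isCont_dwp my by (simp add: isCont_def)
  define F where "F x = D x * (1 + (x + y) * Zs (x + y)) + (wpf x - c) * (zf (x - y) - 2 * zf x) - dwp x" for x
  have limF: "(F \<longlongrightarrow> dwp (- y) * (1 + (- y + y) * Zs (- y + y)) + (wpf (- y) - c) * (zf (- y - y) - 2 * zf (- y)) - dwp (- y)) (at (- y))"
    unfolding F_def[abs_def] by (intro tendsto_intros dD cZ c1 c2 c3 c4)
  have ev: "eventually (\<lambda>x. F x = Hf y x) (at (- y))"
    unfolding eventually_at
  proof (intro exI[of _ 1] conjI allI ballI impI)
    fix x assume "x \<noteq> - y \<and> dist x (- y) < 1"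
    hence xy: "x + y \<noteq> 0" by (auto simp: add_eq_0_iff)
    show "F x = Hf y x"
      unfolding F_def Hf_def D_def cc' wzeta_eq[of "x + y"]
      using xy by (simp add: c_def field_simps)
  qed simp
  show ?thesis using tendsto_cong[OF ev, THEN iffD1, OF limF] by blast
qed

end

context wlat
begin

lemma dwp_nz_2: "x \<notin> L \<Longrightarrow> dwp x \<noteq> 0 \<Longrightarrow> x + x \<notin> L"
proof
  assume x: "x \<notin> L" "dwp x \<noteq> 0" "x + x \<in> L"
  have "2 * x = x + x" by simp
  hence "2 * x \<in> L" using x(3) by simp
  from deriv_wp_half[OF x(1) this] x(2) show False by simp
qed

theorem addition:
  assumes y: "y \<notin> L" "dwp y \<noteq> 0" and x: "x \<notin> L" "x - y \<notin> L" "x + y \<notin> L"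
  shows "(wpf x - wpf y) * (zf (x + y) + zf (x - y) - 2 * zf x) = dwp x"
proof -
  have y2: "y + y \<notin> L" by (rule dwp_nz_2[OF y])
  have my: "- y \<notin> L" using y L_uminus_iff by simp
  define E where "E = {z. z \<in> L \<or> z - y \<in> L \<or> z + y \<in> L}"
  have notE: "z \<notin> L" "z - y \<notin> L" "z + y \<notin> L" if "z \<notin> E" for z using that by (auto simp: E_def)
  have Efin: "finite (E \<inter> cball z 1)" for z
  proof -
    have "E \<inter> cball z 1 \<subseteq> (L \<inter> cball z 1) \<union> (\<lambda>w. w + y) ` (L \<inter> cball (z - y) 1) \<union> (\<lambda>w. w - y) ` (L \<inter> cball (z + y) 1)"
    proof
      fix u assume u: "u \<in> E \<inter> cball z 1"
      hence d: "dist z u \<le> 1" by simp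
      consider "u \<in> L" | "u - y \<in> L" | "u + y \<in> L" using u by (auto simp: E_def)
      then show "u \<in> (L \<inter> cball z 1) \<union> (\<lambda>w. w + y) ` (L \<inter> cball (z - y) 1) \<union> (\<lambda>w. w - y) ` (L \<inter> cball (z + y) 1)"
      proof cases
        case 1 thus ?thesis using d by auto
      next
        case 2
        have "dist (z - y) (u - y) \<le> 1" using d by (simp add: dist_norm)
        hence "u - y \<in> L \<inter> cball (z - y) 1" using 2 by auto
        hence "(u - y) + y \<in> (\<lambda>w. w + y) ` (L \<inter> cball (z - y) 1)" by blast
        thus ?thesis by simp
      next
        case 3
        have "dist (z + y) (u + y) \<le> 1" using d by (simp add: dist_norm)
        hence "u + y \<in> L \<inter> cball (z + y) 1" using 3 by auto
        hence "(u + y) - y \<in> (\<lambda>w. w - y) ` (L \<inter> cball (z + y) 1)" by blast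
        thus ?thesis by simp
      qed
    qed
    thus ?thesis by (rule finite_subset) (intro finite_UnI finite_imageI L_finite)
  qed
  have Eper: "z + \<omega> \<in> E \<longleftrightarrow> z \<in> E" if om: "\<omega> \<in> L" for z \<omega>
  proof -
    have e1: "z + \<omega> - y = (z - y) + \<omega>" and e2: "z + \<omega> + y = (z + y) + \<omega>" by (simp_all add: algebra_simps)
    show ?thesis unfolding E_def mem_Collect_eq e1 e2 by (simp only: L_shift[OF om])
  qed
  have per: "Hf y (z + \<omega>) = Hf y z" if om: "\<omega> \<in> L" and z: "z \<notin> E" for z \<omega>
  proof -
    obtain \<eta> where \<eta>: "\<And>z. z \<notin> L \<Longrightarrow> zf (z + \<omega>) = zf z + \<eta>" using wzeta_quasi[OF om] by blast
    have a: "zf (z + \<omega> + y) = zf (z + y) + \<eta>"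
      using \<eta>[OF notE(3)[OF z]] by (simp add: algebra_simps)
    have b: "zf (z + \<omega> - y) = zf (z - y) + \<eta>"
      using \<eta>[OF notE(2)[OF z]] by (simp add: algebra_simps)
    have c: "zf (z + \<omega>) = zf z + \<eta>" using \<eta>[OF notE(1)[OF z]] .
    show ?thesis unfolding Hf_def a b c
      using wp_periodic[OF om notE(1)[OF z]] deriv_wp_periodic[OF om notE(1)[OF z]]
      by (simp add: algebra_simps)
  qed
  have sub1: "- E \<subseteq> - L" and sub2: "- E \<subseteq> {z. z + y \<notin> L}" and sub3: "- E \<subseteq> {z. z - y \<notin> L}"
    by (auto simp: E_def)
  have hol: "Hf y holomorphic_on (- E)"
    unfolding Hf_def[abs_def]
    by (intro holomorphic_intros holomorphic_on_subset[OF wp_holo sub1] holomorphic_on_subset[OF zf_shift_holo sub2]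
          holomorphic_on_subset[OF zf_shift_holo' sub3] holomorphic_on_subset[OF wzeta_holo sub1]
          holomorphic_on_subset[OF deriv_wp_holo sub1])
  have lim: "\<exists>l. (Hf y \<longlongrightarrow> l) (at e)" if e: "e \<in> E" for e
  proof -
    have shift: "\<exists>l. (Hf y \<longlongrightarrow> l) (at e)" if b: "\<exists>l. (Hf y \<longlongrightarrow> l) (at b)" and om: "e - b \<in> L" for b
    proof -
      obtain l where l: "(Hf y \<longlongrightarrow> l) (at b)" using b by blast
      have "(Hf y \<longlongrightarrow> l) (at (b + (e - b)))"
        by (rule lim_shift[OF Efin Eper per[OF om] om l]) (auto simp: Eper)
      thus ?thesis by auto
    qed
    consider "e \<in> L" | "e - y \<in> L" | "e + y \<in> L" using e by (auto simp: E_def)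
    thus ?thesis
    proof cases
      case 1 thus ?thesis using shift[OF H_lim0[OF y(1)], of] by simp
    next
      case 2 thus ?thesis using shift[OF H_limy[OF y(1) y2]] by simp
    next
      case 3 thus ?thesis using shift[OF H_limmy[OF y(1) y2]] by simp
    qed
  qed
  obtain c where c: "\<And>z. z \<notin> E \<Longrightarrow> Hf y z = c"
    by (rule elliptic_const[OF Efin Eper hol _ _ lim]) (use per L_w1 L_w2 in auto)
  have odd: "Hf y (- z) = - Hf y z" if z: "z \<notin> E" for z
  proof -
    have a: "zf (- z + y) = - zf (z - y)"
    proof -
      have "- z + y = - (z - y)" by simp
      thus ?thesis by (simp only: wzeta_odd)
    qed
    have b: "zf (- z - y) = - zf (z + y)"
    proof -
      have "- z - y = - (z + y)" by simp
      thus ?thesis by (simp only: wzeta_odd)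
    qed
    show ?thesis unfolding Hf_def a b wzeta_odd wp_even deriv_wp_odd[OF notE(1)[OF z]]
      by (simp add: algebra_simps)
  qed
  have mE: "- z \<notin> E" if zE: "z \<notin> E" for z
  proof -
    have a1: "- z \<notin> L" using notE(1)[OF zE] L_uminus_iff by blast
    have a2: "- z - y \<notin> L"
    proof -
      have "- z - y = - (z + y)" by simp
      thus ?thesis using notE(3)[OF zE] L_uminus_iff by metis
    qed
    have a3: "- z + y \<notin> L"
    proof -
      have "- z + y = - (z - y)" by simp
      thus ?thesis using notE(2)[OF zE] L_uminus_iff by metis
    qed
    show ?thesis using a1 a2 a3 unfolding E_def by blast
  qed
  have "countable E"
  proof -
    have "E \<subseteq> L \<union> (\<lambda>w. w + y) ` L \<union> (\<lambda>w. w - y) ` L"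
    proof
      fix u assume "u \<in> E"
      then consider "u \<in> L" | "u - y \<in> L" | "u + y \<in> L" by (auto simp: E_def)
      thus "u \<in> L \<union> (\<lambda>w. w + y) ` L \<union> (\<lambda>w. w - y) ` L"
        by cases (force, (metis UnI1 UnI2 diff_add_cancel image_eqI add_diff_cancel)+)
    qed
    thus ?thesis by (rule countable_subset) (intro countable_Un countable_image L_countable)
  qed
  then obtain z0 where z0: "z0 \<notin> E"
    using uncountable_UNIV_complex by (metis UNIV_I countable_subset subsetI)
  have "c = 0" using c[OF z0] c[OF mE[OF z0]] odd[OF z0] by simp
  have xE: "x \<notin> E" using x by (simp add: E_def)
  show ?thesis using c[OF xE] \<open>c = 0\<close> by (simp add: Hf_def)
qed

lemma solve_lin:
  fixes a p q r d :: complex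
  assumes "a \<noteq> 0" "a * (p + q - r) = d"
  shows "p - r = d / a - q"
proof -
  have "p + q - r = d / a" using assms by (simp add: eq_divide_eq mult.commute)
  thus ?thesis by (simp add: algebra_simps)
qed

lemma neg_swap:
  fixes a b d u v :: complex
  shows "d/(a-b) - 1/(u-v) = 1/(v-u) - d/(b-a)"
proof -
  have 1: "d/(a-b) = -(d/(b-a))" using divide_minus_right[of d "b - a"] by simp
  have 2: "1/(u-v) = -(1/(v-u))" using divide_minus_right[of 1 "v - u"] by simp
  show ?thesis unfolding 1 2 by simp
qed

lemma quot_alg:
  fixes p q d a :: complex
  assumes "p \<noteq> 0" "q \<noteq> 0"
  shows "((q - d * p) / p^2) / (q / p) = - d / q + 1 / p"
  using assms by (simp add: field_simps power2_eq_square)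

lemma quot_alg':
  fixes d :: complex
  assumes "v - u \<noteq> 0" "b - a \<noteq> 0"
  shows "((b - a - d * (v - u)) / (v - u)^2) / ((b - a) / (v - u)) = 1 / (v - u) - d / (b - a)"
  using quot_alg[OF assms, of d] by (simp add: algebra_simps)

theorem duplication:
  assumes x: "x \<notin> L" "dwp x \<noteq> 0"
  shows "zf (2 * x) - 2 * zf x = deriv dwp x / (2 * dwp x)"
proof -
  have x2: "x + x \<notin> L" by (rule dwp_nz_2[OF x])
  define A where "A y = (wpf y - wpf x - dwp x * (y - x)) / (y - x)^2" for y
  define B where "B y = (wpf y - wpf x) / (y - x)" for y
  have xx: "x \<in> - L" using x by simp
  have tA: "(A \<longlongrightarrow> deriv dwp x / 2) (at x)"
    unfolding A_def[abs_def] by (rule taylor2[OF wp_holo L_open_compl xx])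
  have tB: "(B \<longlongrightarrow> dwp x) (at x)"
    using holomorphic_derivI[OF wp_holo L_open_compl xx, of UNIV] by (simp add: has_field_derivative_iff B_def[abs_def])
  have cZ: "((\<lambda>y. Zs (x - y)) \<longlongrightarrow> Zs (x - x)) (at x)"
    by (rule isCont_tendsto_compose[OF _ tendsto_diff[OF tendsto_const tendsto_ident_at]]) (simp add: isCont_Zs)
  have lim1: "((\<lambda>y. A y / B y - Zs (x - y)) \<longlongrightarrow> (deriv dwp x / 2) / dwp x - Zs (x - x)) (at x)"
    by (intro tendsto_intros tA tB cZ x(2))
  have lim2: "((\<lambda>y. zf (x + y) - 2 * zf x) \<longlongrightarrow> zf (x + x) - 2 * zf x) (at x)"
    by (intro tendsto_intros isCont_tendsto_compose[OF isCont_zf[OF x2]] tendsto_add[OF tendsto_const tendsto_ident_at])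
  have ev1: "eventually (\<lambda>y. y \<notin> L) (at x)" by (rule ev_notin[OF L_finite])
  have ev2: "eventually (\<lambda>y. dwp y \<noteq> 0) (at x)"
    using isCont_dwp[OF x(1)] x(2) unfolding isCont_def by (rule tendsto_imp_eventually_ne)
  have ev3: "eventually (\<lambda>y. B y \<noteq> 0) (at x)" using tB x(2) by (rule tendsto_imp_eventually_ne)
  have ev: "eventually (\<lambda>y. A y / B y - Zs (x - y) = zf (x + y) - 2 * zf x) (at x)"
  proof -
    have ev4: "eventually (\<lambda>y. y \<noteq> x) (at x)" by (simp add: eventually_at_filter)
    show ?thesis using ev1 ev2 ev3 ev4
    proof eventually_elim
      case (elim y)
      hence yx: "y - x \<noteq> 0" by simp
      have wne: "wpf y \<noteq> wpf x" using elim(3) by (simp add: B_def)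
      have xy1: "x - y \<notin> L"
      proof
        assume "x - y \<in> L"
        from wp_periodic[OF this elim(1)] have "wpf (y + (x - y)) = wpf y" .
        thus False using wne by simp
      qed
      have xy2: "x + y \<notin> L"
      proof
        assume "x + y \<in> L"
        moreover have "- y \<notin> L" using elim(1) L_uminus_iff by blast
        ultimately have "wpf (- y + (x + y)) = wpf (- y)" by (rule wp_periodic)
        thus False using wne wp_even[of y] by simp
      qed
      have add: "(wpf x - wpf y) * (zf (x + y) + zf (x - y) - 2 * zf x) = dwp x"
        by (rule addition[OF elim(1) elim(2) x(1) xy1 xy2])
      have wne': "wpf x - wpf y \<noteq> 0" using wne by simp
      have c1: "zf (x + y) - 2 * zf x = dwp x / (wpf x - wpf y) - zf (x - y)"
        by (rule solve_lin[OF wne' add])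
      have c2: "zf (x - y) = 1 / (x - y) + Zs (x - y)" by (rule wzeta_eq)
      have c3: "dwp x / (wpf x - wpf y) - (1 / (x - y) + Zs (x - y)) = A y / B y - Zs (x - y)"
      proof -
        have q: "wpf y - wpf x \<noteq> 0" using wne by simp
        have r1: "A y / B y = 1 / (y - x) - dwp x / (wpf y - wpf x)"
          unfolding A_def B_def by (rule quot_alg'[OF yx q])
        have r2: "dwp x / (wpf x - wpf y) - 1 / (x - y) = 1 / (y - x) - dwp x / (wpf y - wpf x)"
          by (rule neg_swap)
        have "dwp x / (wpf x - wpf y) - (1 / (x - y) + Zs (x - y)) = (dwp x / (wpf x - wpf y) - 1 / (x - y)) - Zs (x - y)"
          by (simp only: diff_diff_eq)
        also have "\<dots> = A y / B y - Zs (x - y)" by (simp only: r1 r2)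
        finally show ?thesis .
      qed
      show ?case by (simp only: c1 c2 c3)
    qed
  qed
  have "((\<lambda>y. zf (x + y) - 2 * zf x) \<longlongrightarrow> (deriv dwp x / 2) / dwp x - Zs (x - x)) (at x)"
    by (rule tendsto_cong[OF ev, THEN iffD1, OF lim1])
  hence "zf (x + x) - 2 * zf x = (deriv dwp x / 2) / dwp x - Zs (x - x)"
    using lim2 tendsto_unique by (metis trivial_limit_at)
  hence h: "zf (x + x) - 2 * zf x = deriv dwp x / (2 * dwp x)" using Zs_0 by simp
  have e: "x + x = 2 * x" by simp
  show ?thesis using h unfolding e .
qed

end

lemma final_alg:
  fixes a e p1 p2 S :: complex
  assumes "p1 \<noteq> 0" "e \<noteq> 0"
  shows "(a / e = p1 * S - p2 / p1) \<longleftrightarrow> (p2 / p1^2 + a / (p1 * e) = S)"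
proof -
  have "(p2 / p1^2 + a / (p1 * e) = S) \<longleftrightarrow> p1 * (p2 / p1^2 + a / (p1 * e)) = p1 * S"
    using assms(1) by simp
  also have "p1 * (p2 / p1^2 + a / (p1 * e)) = p2 / p1 + a / e"
    using assms by (simp add: field_simps power2_eq_square)
  also have "(p2 / p1 + a / e = p1 * S) \<longleftrightarrow> (a / e = p1 * S - p2 / p1)"
    by (auto simp: algebra_simps)
  finally show ?thesis by simp
qed

context wlat
begin

lemma pointwise:
  assumes X: "X \<notin> L" "dwp X \<noteq> 0" and Y: "Y \<notin> L" "dwp Y \<noteq> 0" and W: "W \<notin> L" "dwp W \<noteq> 0"
    and XY: "wpf X \<noteq> wpf Y" and WX: "wpf W \<noteq> wpf X"
    and v: "v ^ 2 \<noteq> 1"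
  shows "(a / (v ^ 2 - 1) = zf (Y + X) - zf (Y - X) + zf (X + W) + zf (X - W) - 2 * zf (2 * X))
     \<longleftrightarrow> ((v * (v * deriv dwp X) + a * dwp X - rpoly' w1 w2 (wpf X) / 2) / ((v * dwp X) ^ 2 - rpoly w1 w2 (wpf X))
          = 1 / (wpf X - wpf Y) + 1 / (wpf X - wpf W))"
proof -
  define p1 where "p1 = dwp X"
  define p2 where "p2 = deriv dwp X"
  define S where "S = 1 / (wpf X - wpf Y) + 1 / (wpf X - wpf W)"
  have e: "v^2 - 1 \<noteq> 0" using v by simp
  have r: "rpoly w1 w2 (wpf X) = p1^2" using wp_ode[OF X(1)] by (simp add: p1_def)
  have r': "rpoly' w1 w2 (wpf X) = 2 * p2" unfolding p2_def wp_second_deriv[OF X] by simp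
  have nmX: "- X \<notin> L" using X L_uminus_iff by simp
  have sep: "X - Z \<notin> L" "X + Z \<notin> L" if Z: "Z \<notin> L" "wpf X \<noteq> wpf Z" for Z
  proof -
    show "X - Z \<notin> L"
    proof
      assume "X - Z \<in> L"
      from wp_periodic[OF this Z(1)] have "wpf (Z + (X - Z)) = wpf Z" .
      thus False using Z(2) by simp
    qed
    show "X + Z \<notin> L"
    proof
      assume "X + Z \<in> L"
      moreover have "- Z \<notin> L" using Z(1) L_uminus_iff by blast
      ultimately have "wpf (- Z + (X + Z)) = wpf (- Z)" by (rule wp_periodic)
      thus False using Z(2) wp_even[of Z] by simp
    qed
  qed
  have XW: "wpf X \<noteq> wpf W" using WX by simp
  have bY: "zf (X + Y) + zf (X - Y) - 2 * zf X = p1 / (wpf X - wpf Y)"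
  proof -
    have "(wpf X - wpf Y) * (zf (X + Y) + zf (X - Y) - 2 * zf X) = dwp X"
      by (rule addition[OF Y X(1) sep[OF Y(1) XY]])
    moreover have "wpf X - wpf Y \<noteq> 0" using XY by simp
    ultimately show ?thesis by (simp add: p1_def eq_divide_eq mult.commute)
  qed
  have bW: "zf (X + W) + zf (X - W) - 2 * zf X = p1 / (wpf X - wpf W)"
  proof -
    have "(wpf X - wpf W) * (zf (X + W) + zf (X - W) - 2 * zf X) = dwp X"
      by (rule addition[OF W X(1) sep[OF W(1) XW]])
    moreover have "wpf X - wpf W \<noteq> 0" using XW by simp
    ultimately show ?thesis by (simp add: p1_def eq_divide_eq mult.commute)
  qed
  have c: "zf (2 * X) - 2 * zf X = p2 / (2 * p1)"
    using duplication[OF X] by (simp add: p1_def p2_def)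
  have z1: "zf (Y + X) = zf (X + Y)" by (simp add: add.commute)
  have z2: "zf (Y - X) = - zf (X - Y)"
  proof -
    have "Y - X = - (X - Y)" by simp
    thus ?thesis by (simp only: wzeta_odd)
  qed
  have rhs: "zf (Y + X) - zf (Y - X) + zf (X + W) + zf (X - W) - 2 * zf (2 * X) = p1 * S - p2 / p1"
  proof -
    have "zf (Y + X) - zf (Y - X) + zf (X + W) + zf (X - W) - 2 * zf (2 * X)
        = (zf (X + Y) + zf (X - Y) - 2 * zf X) + (zf (X + W) + zf (X - W) - 2 * zf X) - 2 * (zf (2 * X) - 2 * zf X)"
      unfolding z1 z2 by (simp add: algebra_simps)
    also have "\<dots> = p1 / (wpf X - wpf Y) + p1 / (wpf X - wpf W) - 2 * (p2 / (2 * p1))"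
      unfolding bY bW c ..
    also have "\<dots> = p1 * S - p2 / p1" by (simp add: S_def algebra_simps)
    finally show ?thesis .
  qed
  have p1nz: "p1 \<noteq> 0" using X by (simp add: p1_def)
  have lhs: "(v * (v * p2) + a * p1 - rpoly' w1 w2 (wpf X) / 2) / ((v * p1) ^ 2 - rpoly w1 w2 (wpf X))
       = p2 / p1^2 + a / (p1 * (v^2 - 1))"
    unfolding r r' using p1nz e by (simp add: field_simps power2_eq_square)
  show ?thesis
    unfolding rhs lhs[unfolded p1_def p2_def] using final_alg[OF p1nz e, of a S p2]
    by (simp add: S_def p1_def p2_def)
qed

end

theorem mainTheorem16:
  fixes w1 w2 :: complex
    and x xd xdd :: "int \<Rightarrow> real \<Rightarrow> complex"
  assumes per: "nondeg_periods w1 w2"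
    and dx: "\<And>k t. (x k has_vector_derivative xd k t) (at t)"
    and dxd: "\<And>k t. (xd k has_vector_derivative xdd k t) (at t)"
    and nl: "\<And>k t. x k t \<notin> lattice w1 w2"
    and ndot: "\<And>k t. (xd k t) ^ 2 \<noteq> 1"
    and nwp': "\<And>k t. deriv (wp w1 w2) (x k t) \<noteq> 0"
    and ndist: "\<And>k t. wp w1 w2 (x k t) \<noteq> wp w1 w2 (x (k + 1) t)"
  shows "(\<forall>k t. xdd k t / ((xd k t) ^ 2 - 1) =
            wzeta w1 w2 (x (k + 1) t + x k t) - wzeta w1 w2 (x (k + 1) t - x k t)
          + wzeta w1 w2 (x k t + x (k - 1) t) + wzeta w1 w2 (x k t - x (k - 1) t)
          - 2 * wzeta w1 w2 (2 * x k t))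
    \<longleftrightarrow>
    (\<forall>k t. (let u = (\<lambda>j s. wp w1 w2 (x j s));
               ud = vector_derivative (u k) (at t);
               udd = vector_derivative (\<lambda>s. vector_derivative (u k) (at s)) (at t)
           in (udd - rpoly' w1 w2 (u k t) / 2) / (ud ^ 2 - rpoly w1 w2 (u k t))
              = 1 / (u k t - u (k + 1) t) + 1 / (u k t - u (k - 1) t)))"
proof -
  interpret wlat w1 w2 by unfold_locales (rule per)
  have xx: "x k t \<in> - L" for k t using nl[of k t] by simp
  have d1: "((\<lambda>s. wpf (x k s)) has_vector_derivative (xd k s * dwp (x k s))) (at s)" for k s
    using field_vector_diff_chain_at[OF dx holomorphic_derivI[OF wp_holo L_open_compl xx]]
    by (simp add: o_def)
  have vd1: "vector_derivative (\<lambda>s. wpf (x k s)) (at s) = xd k s * dwp (x k s)" for k s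
    by (rule vector_derivative_at[OF d1])
  have d2: "((\<lambda>s. xd k s * dwp (x k s)) has_vector_derivative
      (xd k t * (xd k t * deriv dwp (x k t)) + xdd k t * dwp (x k t))) (at t)" for k t
  proof -
    have a: "((\<lambda>s. dwp (x k s)) has_vector_derivative (xd k t * deriv dwp (x k t))) (at t)"
      using field_vector_diff_chain_at[OF dx holomorphic_derivI[OF deriv_wp_holo L_open_compl xx]]
      by (simp add: o_def)
    show ?thesis by (rule has_vector_derivative_mult[OF dxd a])
  qed
  have vd2: "vector_derivative (\<lambda>s. xd k s * dwp (x k s)) (at t)
      = xd k t * (xd k t * deriv dwp (x k t)) + xdd k t * dwp (x k t)" for k t
    by (rule vector_derivative_at[OF d2])
  have pw: "(xdd k t / ((xd k t) ^ 2 - 1) =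
            zf (x (k + 1) t + x k t) - zf (x (k + 1) t - x k t)
          + zf (x k t + x (k - 1) t) + zf (x k t - x (k - 1) t)
          - 2 * zf (2 * x k t))
    \<longleftrightarrow> ((let u = (\<lambda>j s. wp w1 w2 (x j s));
               ud = vector_derivative (u k) (at t);
               udd = vector_derivative (\<lambda>s. vector_derivative (u k) (at s)) (at t)
           in (udd - rpoly' w1 w2 (u k t) / 2) / (ud ^ 2 - rpoly w1 w2 (u k t))
              = 1 / (u k t - u (k + 1) t) + 1 / (u k t - u (k - 1) t)))" for k t
  proof -
    have W: "wpf (x (k - 1) t) \<noteq> wpf (x k t)" using ndist[of "k - 1" t] by simp
    have "(xdd k t / ((xd k t) ^ 2 - 1) =
            zf (x (k + 1) t + x k t) - zf (x (k + 1) t - x k t)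
          + zf (x k t + x (k - 1) t) + zf (x k t - x (k - 1) t)
          - 2 * zf (2 * x k t))
      \<longleftrightarrow> ((xd k t * (xd k t * deriv dwp (x k t)) + xdd k t * dwp (x k t) - rpoly' w1 w2 (wpf (x k t)) / 2)
            / ((xd k t * dwp (x k t)) ^ 2 - rpoly w1 w2 (wpf (x k t)))
          = 1 / (wpf (x k t) - wpf (x (k + 1) t)) + 1 / (wpf (x k t) - wpf (x (k - 1) t)))"
      by (rule pointwise[OF nl nwp' nl nwp' nl nwp' ndist W ndot])
    thus ?thesis unfolding Let_def vd1 vd2 by (simp add: mult.commute)
  qed
  show ?thesis using pw by blast
qed

end
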